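(* Let $\mathbf A$ be a nonzero $m\times n$ real matrix and $\mathbf b\ne\mathbf 0$ with $\mathbf A\mathbf x=\mathbf b$ consistent, $\alpha>0$, and let $f,\mathcal Y^*,\mathbf x^*,\nu$ be as defined in the context, with $f^*=\min f$. Let $\mathbf y^{(0)}\in\mathbb R^m$ be arbitrary, $0<h<2\nu/(\alpha^2\|\mathbf A\|_2^4)$, and for $k\ge0$ $$\mathbf x^{(k+1)}=\alpha\,\mathrm{shrink}(\mathbf A^\top\mathbf y^{(k)}),\qquad \mathbf y^{(k+1)}=\mathbf y^{(k)}-h\big(-\mathbf b+\alpha\mathbf A\,\mathrm{shrink}(\mathbf A^\top\mathbf y^{(k)})\big).$$ Then, with $\mu:=1-2h\nu+h^2\alpha^2\|\mathbf A\|_2^4\in(0,1)$ and $L:=\alpha\|\mathbf A\|_2^2$ (a Lipschitz constant of $\nabla f$), for all $k\ge0$: $$\mathrm{dist}(\mathbf y^{(k)},\mathcal Y^* )\le\mu^{k/2}\mathrm{dist}(\mathbf y^{(0)},\mathcal Y^* ),\qquad f(\mathbf y^{(k)})-f^*\le\frac L2\mu^k\mathrm{dist}^2(\mathbf y^{(0)},\mathcal Y^* ),$$ $$\|\mathbf x^{(k+1)}-\mathbf x^*\|_2\le\alpha\|\mathbf A\|_2\,\mathrm{dist}(\mathbf y^{(k)},\mathcal Y^* ).$$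
   Context: $\mathbf x^*$ is the unique solution of $\min_{\mathbf x}\{\|\mathbf x\|_1+\frac{1}{2\alpha}\|\mathbf x\|_2^2:\mathbf A\mathbf x=\mathbf b\}$. $\mathrm{shrink}(\mathbf z)=\mathrm{sign}(\mathbf z)\max\{|\mathbf z|-\mathbf 1,\mathbf 0\}$ componentwise. $f(\mathbf y)=-\mathbf b^\top\mathbf y+\frac\alpha2\|\mathrm{shrink}(\mathbf A^\top\mathbf y)\|_2^2$ with gradient $-\mathbf b+\alpha\mathbf A\,\mathrm{shrink}(\mathbf A^\top\mathbf y)$; $\mathcal Y^*=\{\mathbf y:\alpha\,\mathrm{shrink}(\mathbf A^\top\mathbf y)=\mathbf x^*\}$ is the set of minimizers of $f$. $\nu=\lambda_{\mathbf A}\min_{i\in\mathrm{supp}(\mathbf x^* )}\frac{\alpha|x_i^*|}{|x_i^*|+2\alpha}$, where $\lambda_{\mathbf A}$ is the minimum, over all nonzero submatrices $\mathbf C$ of $\mathbf A$ formed by subsets of columns, of the smallest strictly positive eigenvalue of $\mathbf C\mathbf C^\top$. $\mathrm{dist}(\mathbf z,\mathcal Z)=\min_{\mathbf z'\in\mathcal Z}\|\mathbf z-\mathbf z'\|_2$; $\|\mathbf A\|_2$ is the spectral norm. *)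

theory Defs
  imports "HOL-Analysis.Analysis"
begin

definition shrink :: "real^'k \<Rightarrow> real^'k" where
  "shrink z = (\<chi> i. sgn (z $ i) * max (\<bar>z $ i\<bar> - 1) 0)"

definition l1norm :: "real^'k \<Rightarrow> real" where
  "l1norm x = (\<Sum>i\<in>UNIV. \<bar>x $ i\<bar>)"

definition rbp_obj :: "real \<Rightarrow> real^'n \<Rightarrow> real" where
  "rbp_obj \<alpha> x = l1norm x + (1 / (2 * \<alpha>)) * (norm x)\<^sup>2"

definition is_rbp_solution :: "real^'n^'m \<Rightarrow> real^'m \<Rightarrow> real \<Rightarrow> real^'n \<Rightarrow> bool" where
  "is_rbp_solution A b \<alpha> x \<longleftrightarrow>
     A *v x = b \<and> (\<forall>x'. A *v x' = b \<longrightarrow> rbp_obj \<alpha> x \<le> rbp_obj \<alpha> x')"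

definition dual_f :: "real^'n^'m \<Rightarrow> real^'m \<Rightarrow> real \<Rightarrow> real^'m \<Rightarrow> real" where
  "dual_f A b \<alpha> y = - (b \<bullet> y) + (\<alpha> / 2) * (norm (shrink (transpose A *v y)))\<^sup>2"

definition dual_grad :: "real^'n^'m \<Rightarrow> real^'m \<Rightarrow> real \<Rightarrow> real^'m \<Rightarrow> real^'m" where
  "dual_grad A b \<alpha> y = - b + \<alpha> *\<^sub>R (A *v shrink (transpose A *v y))"

definition Ystar :: "real^'n^'m \<Rightarrow> real \<Rightarrow> real^'n \<Rightarrow> (real^'m) set" where
  "Ystar A \<alpha> xs = {y. \<alpha> *\<^sub>R shrink (transpose A *v y) = xs}"

text \<open>C C^T for the column submatrix C of A with column index set S.\<close>
definition colsub_gram :: "real^'n^'m \<Rightarrow> 'n set \<Rightarrow> real^'m^'m" where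
  "colsub_gram A S = (\<chi> i k. \<Sum>j\<in>S. A $ i $ j * A $ k $ j)"

definition is_eigenvalue :: "real^'m^'m \<Rightarrow> real \<Rightarrow> bool" where
  "is_eigenvalue M l \<longleftrightarrow> (\<exists>v. v \<noteq> 0 \<and> M *v v = l *\<^sub>R v)"

definition lambdaA :: "real^'n^'m \<Rightarrow> real" where
  "lambdaA A = Min {l. \<exists>S. (\<exists>j\<in>S. column j A \<noteq> 0) \<and> 0 < l \<and> is_eigenvalue (colsub_gram A S) l}"

definition nu_const :: "real^'n^'m \<Rightarrow> real \<Rightarrow> real^'n \<Rightarrow> real" where
  "nu_const A \<alpha> xs = lambdaA A *
     Min ((\<lambda>i. \<alpha> * \<bar>xs $ i\<bar> / (\<bar>xs $ i\<bar> + 2 * \<alpha>)) ` {i. xs $ i \<noteq> 0})"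

definition spec_norm :: "real^'n^'m \<Rightarrow> real" where
  "spec_norm A = onorm (\<lambda>x. A *v x)"

end

theory Submission
  imports Defs
begin

definition sh :: "real \<Rightarrow> real" where "sh t = sgn t * max (\<bar>t\<bar> - 1) 0"

lemma shrink_nth: "shrink z $ i = sh (z $ i)"
  by (simp add: shrink_def sh_def)

lemma sh_cases: "sh t = (if t > 1 then t - 1 else if t < -1 then t + 1 else 0)"
  by (auto simp: sh_def sgn_if max_def)

lemma sh_lip: "\<bar>sh a - sh b\<bar> \<le> \<bar>a - b\<bar>"
  unfolding sh_cases by auto

lemma sh_mono: "0 \<le> (sh a - sh b) * (a - b)"
proof -
  have "(sh a - sh b) = 0 \<or> (sh a - sh b > 0 \<and> a - b > 0) \<or> (sh a - sh b < 0 \<and> a - b < 0)"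
    unfolding sh_cases by auto
  then show ?thesis by (auto simp: mult_pos_pos mult_neg_neg less_imp_le)
qed

lemma sh_cvx: "(sh b)^2 / 2 + sh b * (a - b) \<le> (sh a)^2 / 2"
proof -
  have e: "(sh a)^2/2 - (sh b)^2/2 - sh b * (a - b) = (sh a - sh b)^2/2 + sh b * ((sh a - sh b) - (a - b))"
    by (simp add: power2_eq_square field_simps)
  have "0 \<le> sh b * ((sh a - sh b) - (a - b))"
    unfolding sh_cases by (auto intro: mult_nonneg_nonneg mult_nonpos_nonpos)
  moreover have "0 \<le> (sh a - sh b)^2/2" by simp
  ultimately show ?thesis using e by linarith
qed

lemma sh_desc: "(sh a)^2 / 2 \<le> (sh b)^2 / 2 + sh b * (a - b) + (a - b)^2 / 2"
proof -
  have bc: "b > 1 \<or> b < -1 \<or> (-1 \<le> b \<and> b \<le> 1)" by linarith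
  consider "a > 1" | "a < -1" | "-1 \<le> a \<and> a \<le> 1" by linarith
  then show ?thesis
  proof cases
    assume a: "a > 1"
    show ?thesis using bc
    proof (elim disjE)
      assume "b > 1"
      moreover have "(a - 1)^2/2 = (b - 1)^2/2 + (b - 1)*(a - b) + (a - b)^2/2"
        by (simp add: power2_eq_square field_simps)
      ultimately show ?thesis using a unfolding sh_cases by simp
    next
      assume b: "b < -1"
      have "(b + 1)^2/2 + (b + 1)*(a - b) + (a - b)^2/2 - (a - 1)^2/2 = 2*a"
        by (simp add: power2_eq_square field_simps)
      then show ?thesis using a b unfolding sh_cases by simp
    next
      assume b: "-1 \<le> b \<and> b \<le> 1"
      have "(a - 1)^2 \<le> (a - b)^2" using a b by (intro power_mono) auto
      then show ?thesis using a b unfolding sh_cases by simp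
    qed
  next
    assume a: "a < -1"
    show ?thesis using bc
    proof (elim disjE)
      assume "b < -1"
      moreover have "(a + 1)^2/2 = (b + 1)^2/2 + (b + 1)*(a - b) + (a - b)^2/2"
        by (simp add: power2_eq_square field_simps)
      ultimately show ?thesis using a unfolding sh_cases by simp
    next
      assume b: "b > 1"
      have "(b - 1)^2/2 + (b - 1)*(a - b) + (a - b)^2/2 - (a + 1)^2/2 = -2*a"
        by (simp add: power2_eq_square field_simps)
      then show ?thesis using a b unfolding sh_cases by simp
    next
      assume b: "-1 \<le> b \<and> b \<le> 1"
      have "(-(a + 1))^2 \<le> (b - a)^2" using a b by (intro power_mono) auto
      then have "(a + 1)^2 \<le> (a - b)^2" by (simp add: power2_commute add.commute)
      then show ?thesis using a b unfolding sh_cases by simp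
    qed
  next
    assume a: "-1 \<le> a \<and> a \<le> 1"
    show ?thesis using bc
    proof (elim disjE)
      assume b: "b > 1"
      have eq: "(b - 1)^2/2 + (b - 1)*(a - b) + (a - b)^2/2 = (a - 1)^2/2" by (simp add: power2_eq_square field_simps)
      have sa: "sh a = 0" and sb: "sh b = b - 1" using a b by (auto simp: sh_cases)
      have "0 \<le> (a - 1)^2/2" by simp
      then show ?thesis unfolding sa sb using eq by (simp only: power_zero_numeral div_0)
    next
      assume b: "b < -1"
      have eq: "(b + 1)^2/2 + (b + 1)*(a - b) + (a - b)^2/2 = (a + 1)^2/2" by (simp add: power2_eq_square field_simps)
      have sa: "sh a = 0" and sb: "sh b = b + 1" using a b by (auto simp: sh_cases)
      have "0 \<le> (a + 1)^2/2" by simp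
      then show ?thesis unfolding sa sb using eq by (simp only: power_zero_numeral div_0)
    next
      assume b: "-1 \<le> b \<and> b \<le> 1"
      then show ?thesis using a unfolding sh_cases by simp
    qed
  qed
qed

lemma sh_supp:
  assumes "\<beta> > 0" "\<bar>\<sigma>\<bar> = 1"
  shows "\<beta> / (\<beta> + 2) * (z - \<sigma> * (1 + \<beta>))^2 \<le> (sh z - sh (\<sigma> * (1 + \<beta>))) * (z - \<sigma> * (1 + \<beta>))"
proof -
  have key: "\<beta> / (\<beta> + 2) * (z - (1 + \<beta>))^2 \<le> (sh z - sh (1 + \<beta>)) * (z - (1 + \<beta>))" for z
  proof -
    define d where "d = z - (1 + \<beta>)"
    have shb: "sh (1 + \<beta>) = \<beta>" using assms unfolding sh_cases by auto
    have pos: "\<beta> + 2 > 0" using assms by simp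
    have "\<beta> * d^2 \<le> ((sh z - \<beta>) * d) * (\<beta> + 2)"
    proof -
      consider "z > 1" | "z < -1" | "-1 \<le> z \<and> z \<le> 1" by linarith
      then show ?thesis
      proof cases
        case 1
        then have e: "sh z - \<beta> = d" unfolding sh_cases d_def by simp
        have "((sh z - \<beta>) * d) * (\<beta> + 2) - \<beta> * d^2 = 2 * d^2" unfolding e
          by (simp add: power2_eq_square algebra_simps)
        moreover have "0 \<le> 2 * d^2" by simp
        ultimately show ?thesis by linarith
      next
        case 2
        then have e: "sh z - \<beta> = d + 2" unfolding sh_cases d_def by simp
        have "((sh z - \<beta>) * d) * (\<beta> + 2) - \<beta> * d^2 = 2 * ((-d) * (-(d + \<beta> + 2)))" unfolding e
          by (simp add: power2_eq_square algebra_simps)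
        moreover have "0 \<le> (-d) * (-(d + \<beta> + 2))" using 2 assms unfolding d_def
          by (intro mult_nonneg_nonneg) auto
        ultimately show ?thesis by linarith
      next
        case 3
        then have e: "sh z - \<beta> = - \<beta>" unfolding sh_cases d_def by simp
        have "((sh z - \<beta>) * d) * (\<beta> + 2) - \<beta> * d^2 = \<beta> * ((-d) * (d + \<beta> + 2))" unfolding e
          by (simp add: power2_eq_square algebra_simps)
        moreover have "0 \<le> \<beta> * ((-d) * (d + \<beta> + 2))" using 3 assms unfolding d_def
          by (intro mult_nonneg_nonneg) auto
        ultimately show ?thesis by linarith
      qed
    qed
    then have "\<beta> * d^2 / (\<beta> + 2) \<le> (sh z - \<beta>) * d"
      using pos by (simp add: pos_divide_le_eq)
    then show ?thesis unfolding d_def[symmetric] shb by simp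
  qed
  have odd: "sh (- t) = - sh t" for t unfolding sh_cases by auto
  from assms(2) have "\<sigma> = 1 \<or> \<sigma> = -1" by auto
  then show ?thesis
  proof
    assume "\<sigma> = 1" then show ?thesis using key[of z] by simp
  next
    assume s: "\<sigma> = -1"
    have "\<beta> / (\<beta> + 2) * (- z - (1 + \<beta>))^2 \<le> (sh (-z) - sh (1 + \<beta>)) * (- z - (1 + \<beta>))"
      by (rule key)
    moreover have "sh z - sh (\<sigma> * (1 + \<beta>)) = -(sh (-z) - sh (1 + \<beta>))"
      using s odd[of "-z"] odd[of "1 + \<beta>"] by simp
    moreover have "z - \<sigma> * (1 + \<beta>) = -((-z) - (1 + \<beta>))" using s by simp
    ultimately show ?thesis by (simp only: minus_mult_minus power2_minus)
  qed
qed

lemma sh_off: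
  assumes "\<bar>w\<bar> \<le> 1"
  shows "(max (\<bar>z\<bar> - 1) 0)^2 \<le> (sh z - sh w) * (z - w)"
proof -
  have w: "sh w = 0" using assms unfolding sh_cases by auto
  consider "z > 1" | "z < -1" | "-1 \<le> z \<and> z \<le> 1" by linarith
  then show ?thesis
  proof cases
    case 1
    then have "(max (\<bar>z\<bar> - 1) 0)^2 = (z - 1) * (z - 1)" by (simp add: power2_eq_square)
    also have "\<dots> \<le> (z - 1) * (z - w)" using 1 assms by (intro mult_left_mono) auto
    finally show ?thesis using w 1 unfolding sh_cases by simp
  next
    case 2
    then have "(max (\<bar>z\<bar> - 1) 0)^2 = (-(z + 1)) * (-(z + 1))" by (simp add: power2_eq_square)
    also have "\<dots> \<le> (-(z + 1)) * (w - z)" using 2 assms by (intro mult_left_mono) auto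
    finally show ?thesis using w 2 unfolding sh_cases by (simp add: algebra_simps)
  next
    case 3 then show ?thesis using w unfolding sh_cases by (simp add: max_def abs_le_iff)
  qed
qed

definition indep_fam :: "('k \<Rightarrow> 'a::real_vector) \<Rightarrow> 'k set \<Rightarrow> bool" where
  "indep_fam g J \<longleftrightarrow> (\<forall>c. (\<Sum>k\<in>J. c k *\<^sub>R g k) = 0 \<longrightarrow> (\<forall>k\<in>J. c k = 0))"

lemma reduce_indep:
  fixes g :: "'k \<Rightarrow> 'a::real_vector"
  assumes "finite E"
  shows "\<exists>J d. J \<subseteq> E \<and> indep_fam g J \<and> (\<Sum>k\<in>E. c k *\<^sub>R g k) = (\<Sum>k\<in>J. d k *\<^sub>R g k)"
  using assms
proof (induction E arbitrary: c rule: finite_psubset_induct)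
  case (psubset E)
  show ?case
  proof (cases "indep_fam g E")
    case True then show ?thesis by blast
  next
    case False
    then obtain c0 k0 where c0: "(\<Sum>k\<in>E. c0 k *\<^sub>R g k) = 0" and k0: "k0 \<in> E" "c0 k0 \<noteq> 0"
      unfolding indep_fam_def by blast
    define E' where "E' = E - {k0}"
    have fE': "finite E'" using psubset.hyps unfolding E'_def by simp
    have sub: "E' \<subset> E" using k0 unfolding E'_def by blast
    have split: "(\<Sum>k\<in>E. f k) = f k0 + (\<Sum>k\<in>E'. f k)" for f :: "'k \<Rightarrow> 'a"
      using psubset.hyps k0 unfolding E'_def by (simp add: sum.remove)
    have gk0: "g k0 = - (\<Sum>k\<in>E'. (c0 k / c0 k0) *\<^sub>R g k)"
    proof -
      have "c0 k0 *\<^sub>R g k0 + (\<Sum>k\<in>E'. c0 k *\<^sub>R g k) = 0" using c0 split[of "\<lambda>k. c0 k *\<^sub>R g k"] by simp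
      then have e1: "c0 k0 *\<^sub>R g k0 = - (\<Sum>k\<in>E'. c0 k *\<^sub>R g k)"
        by (simp add: eq_neg_iff_add_eq_0)
      have "g k0 = (1 / c0 k0) *\<^sub>R (c0 k0 *\<^sub>R g k0)" using k0 by simp
      also have "\<dots> = - (1 / c0 k0) *\<^sub>R (\<Sum>k\<in>E'. c0 k *\<^sub>R g k)" unfolding e1 by simp
      finally have "g k0 = - (1 / c0 k0) *\<^sub>R (\<Sum>k\<in>E'. c0 k *\<^sub>R g k)" .
      also have "\<dots> = - (\<Sum>k\<in>E'. (c0 k / c0 k0) *\<^sub>R g k)"
        by (simp add: scaleR_sum_right sum_negf)
      finally show ?thesis .
    qed
    define c' where "c' k = c k - c k0 * (c0 k / c0 k0)" for k
    have "(\<Sum>k\<in>E. c k *\<^sub>R g k) = (\<Sum>k\<in>E'. c' k *\<^sub>R g k)"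
    proof -
      have "(\<Sum>k\<in>E. c k *\<^sub>R g k) = c k0 *\<^sub>R g k0 + (\<Sum>k\<in>E'. c k *\<^sub>R g k)"
        using split[of "\<lambda>k. c k *\<^sub>R g k"] by simp
      also have "\<dots> = (\<Sum>k\<in>E'. c k *\<^sub>R g k) - (\<Sum>k\<in>E'. (c k0 * (c0 k / c0 k0)) *\<^sub>R g k)"
        unfolding gk0 by (simp add: scaleR_sum_right)
      also have "\<dots> = (\<Sum>k\<in>E'. c' k *\<^sub>R g k)"
        unfolding c'_def by (simp add: sum_subtractf scaleR_left_diff_distrib)
      finally show ?thesis .
    qed
    moreover obtain J d where "J \<subseteq> E'" "indep_fam g J" "(\<Sum>k\<in>E'. c' k *\<^sub>R g k) = (\<Sum>k\<in>J. d k *\<^sub>R g k)"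
      using psubset.IH[OF sub, of c'] by blast
    moreover have "J \<subseteq> E" using \<open>J \<subseteq> E'\<close> sub by blast
    ultimately show ?thesis by (intro exI[of _ J] exI[of _ d]) simp
  qed
qed

lemma orth_span_rep:
  fixes g :: "'k \<Rightarrow> 'a::euclidean_space"
  assumes "finite E" and H: "\<And>w. (\<forall>k\<in>E. g k \<bullet> w = 0) \<Longrightarrow> v \<bullet> w \<le> 0"
  shows "\<exists>c. v = (\<Sum>k\<in>E. c k *\<^sub>R g k)"
proof -
  define W where "W = range (\<lambda>c. \<Sum>k\<in>E. c k *\<^sub>R g k)"
  have sW: "subspace W"
  proof (rule subspaceI)
    show "0 \<in> W" unfolding W_def by (rule range_eqI[of _ _ "\<lambda>_. 0"]) simp
  next
    fix x y assume "x \<in> W" "y \<in> W"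
    then obtain a b where "x = (\<Sum>k\<in>E. a k *\<^sub>R g k)" "y = (\<Sum>k\<in>E. b k *\<^sub>R g k)"
      unfolding W_def by blast
    then show "x + y \<in> W" unfolding W_def
      by (intro range_eqI[of _ _ "\<lambda>k. a k + b k"]) (simp add: sum.distrib scaleR_add_left)
  next
    fix r :: real and x assume "x \<in> W"
    then obtain a where "x = (\<Sum>k\<in>E. a k *\<^sub>R g k)" unfolding W_def by blast
    then show "r *\<^sub>R x \<in> W" unfolding W_def
      by (intro range_eqI[of _ _ "\<lambda>k. r * a k"]) (simp add: scaleR_sum_right)
  qed
  have gW: "g k \<in> W" if "k \<in> E" for k
  proof -
    have "(\<Sum>j\<in>E. (if j = k then 1 else 0) *\<^sub>R g j) = (\<Sum>j\<in>E. if j = k then g j else 0)"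
      by (rule sum.cong) auto
    also have "\<dots> = g k" using that assms(1) by simp
    finally have eq: "(\<Sum>j\<in>E. (if j = k then 1 else 0) *\<^sub>R g j) = g k" .
    show ?thesis unfolding W_def by (rule range_eqI[of _ _ "\<lambda>j. if j = k then 1 else 0"]) (simp only: eq)
  qed
  obtain p q where p: "p \<in> span W" and q: "\<And>w. w \<in> span W \<Longrightarrow> orthogonal q w" and v: "v = p + q"
    using orthogonal_subspace_decomp_exists by blast
  have spanW: "span W = W" using sW by (simp add: span_eq_iff)
  have gq: "\<forall>k\<in>E. g k \<bullet> q = 0"
  proof
    fix k assume "k \<in> E"
    then have "g k \<in> span W" using gW by (intro span_base)
    then have "orthogonal q (g k)" by (rule q)
    then show "g k \<bullet> q = 0" by (simp add: orthogonal_def inner_commute)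
  qed
  have gq': "\<forall>k\<in>E. g k \<bullet> (-q) = 0" using gq by simp
  have "v \<bullet> q \<le> 0" using H[OF gq] .
  moreover have "v \<bullet> (-q) \<le> 0" using H[OF gq'] .
  ultimately have vq: "v \<bullet> q = 0" by simp
  have "p \<bullet> q = 0" using q[OF p] by (simp add: orthogonal_def inner_commute)
  then have "q \<bullet> q = 0" using vq v by (simp add: inner_add_left)
  then have "q = 0" by simp
  then have "v \<in> W" using v p spanW by simp
  then show ?thesis unfolding W_def by blast
qed

lemma farkas_indep:
  fixes g :: "'k \<Rightarrow> 'a::euclidean_space"
  assumes "finite I" "finite E" "E \<inter> I = {}"
    and H: "\<And>w. (\<forall>k\<in>E. g k \<bullet> w = 0) \<Longrightarrow> (\<forall>k\<in>I. g k \<bullet> w \<le> 0) \<Longrightarrow> v \<bullet> w \<le> 0"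
  shows "\<exists>J c. J \<subseteq> E \<union> I \<and> indep_fam g J \<and> v = (\<Sum>k\<in>J. c k *\<^sub>R g k) \<and> (\<forall>k\<in>J \<inter> I. c k \<ge> 0)"
  using assms
proof (induction I arbitrary: E rule: finite_induct)
  case empty
  then obtain c where "v = (\<Sum>k\<in>E. c k *\<^sub>R g k)" using orth_span_rep[of E g v] by auto
  then obtain J d where "J \<subseteq> E" "indep_fam g J" "v = (\<Sum>k\<in>J. d k *\<^sub>R g k)"
    using reduce_indep[OF empty.prems(1), of g c] by auto
  then show ?case by auto
next
  case (insert t F)
  show ?case
  proof (cases "\<forall>w. (\<forall>k\<in>E. g k \<bullet> w = 0) \<longrightarrow> (\<forall>k\<in>F. g k \<bullet> w \<le> 0) \<longrightarrow> v \<bullet> w \<le> 0")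
    case True
    then have Hf: "\<And>w. (\<forall>k\<in>E. g k \<bullet> w = 0) \<Longrightarrow> (\<forall>k\<in>F. g k \<bullet> w \<le> 0) \<Longrightarrow> v \<bullet> w \<le> 0" by blast
    have dEF: "E \<inter> F = {}" using insert.prems(2) by auto
    obtain J c where "J \<subseteq> E \<union> F" "indep_fam g J" "v = (\<Sum>k\<in>J. c k *\<^sub>R g k)" "\<forall>k\<in>J \<inter> F. c k \<ge> 0"
      using insert.IH[OF insert.prems(1) dEF Hf] by blast
    moreover have "J \<inter> insert t F \<subseteq> J \<inter> F"
      using \<open>J \<subseteq> E \<union> F\<close> insert.prems(2) insert.hyps(2) by auto
    ultimately show ?thesis by (intro exI[of _ J] exI[of _ c]) auto
  next
    case False
    then have "\<exists>w. (\<forall>k\<in>E. g k \<bullet> w = 0) \<and> (\<forall>k\<in>F. g k \<bullet> w \<le> 0) \<and> \<not> v \<bullet> w \<le> 0" by blast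
    then obtain w0 where w0E: "\<forall>k\<in>E. g k \<bullet> w0 = 0" and w0F: "\<forall>k\<in>F. g k \<bullet> w0 \<le> 0" and vw0': "\<not> v \<bullet> w0 \<le> 0"
      by blast
    have vw0: "v \<bullet> w0 > 0" using vw0' by simp
    have gt: "g t \<bullet> w0 > 0"
    proof (rule ccontr)
      assume "\<not> g t \<bullet> w0 > 0"
      then have "\<forall>k\<in>insert t F. g k \<bullet> w0 \<le> 0" using w0F by auto
      then have "v \<bullet> w0 \<le> 0" using insert.prems(3) w0E by blast
      then show False using vw0 by simp
    qed
    have H': "v \<bullet> w \<le> 0" if "\<forall>k\<in>insert t E. g k \<bullet> w = 0" "\<forall>k\<in>F. g k \<bullet> w \<le> 0" for w
      using insert.prems(3)[of w] that by auto
    have disj: "insert t E \<inter> F = {}" using insert.prems(2) insert.hyps(2) by auto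
    obtain J c where J: "J \<subseteq> insert t E \<union> F" "indep_fam g J" "v = (\<Sum>k\<in>J. c k *\<^sub>R g k)" "\<forall>k\<in>J \<inter> F. c k \<ge> 0"
      using insert.IH[OF _ disj H'] insert.prems(1) by blast
    have ct: "c t \<ge> 0" if "t \<in> J"
    proof (rule ccontr)
      assume neg: "\<not> c t \<ge> 0"
      have fJ: "finite J" using J(1) insert.prems(1) insert.hyps(1) finite_subset by blast
      have "v \<bullet> w0 = (\<Sum>k\<in>J. c k * (g k \<bullet> w0))" using J(3) by (simp add: inner_sum_left)
      also have "\<dots> = c t * (g t \<bullet> w0) + (\<Sum>k\<in>J - {t}. c k * (g k \<bullet> w0))"
        using fJ that by (simp add: sum.remove)
      also have "\<dots> \<le> c t * (g t \<bullet> w0) + 0"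
      proof -
        have "c k * (g k \<bullet> w0) \<le> 0" if "k \<in> J - {t}" for k
        proof -
          have "k \<in> E \<or> k \<in> F" using that J(1) by auto
          then show ?thesis
          proof
            assume "k \<in> E" then show ?thesis using w0E by simp
          next
            assume "k \<in> F" then show ?thesis using J(4) w0F that by (auto intro: mult_nonneg_nonpos)
          qed
        qed
        then show ?thesis by (intro add_left_mono sum_nonpos) blast
      qed
      also have "\<dots> < 0" using neg gt by (simp add: mult_neg_pos)
      finally show False using vw0 by simp
    qed
    show ?thesis
      using J ct insert.prems(2) by (intro exI[of _ J] exI[of _ c]) auto
  qed
qed

declare transpose_matrix_vector[simp del]

lemma inner_Av:
  fixes A :: "real^'n^'m"
  shows "(A *v u) \<bullet> d = u \<bullet> (transpose A *v d)"
proof -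
  have "(A *v u) \<bullet> d = (\<Sum>i\<in>UNIV. \<Sum>j\<in>UNIV. A $ i $ j * u $ j * d $ i)"
    by (simp add: inner_vec_def matrix_vector_mult_def sum_distrib_right sum_distrib_left mult_ac)
  also have "\<dots> = (\<Sum>j\<in>UNIV. \<Sum>i\<in>UNIV. A $ i $ j * u $ j * d $ i)"
    by (rule sum.swap)
  also have "\<dots> = u \<bullet> (transpose A *v d)"
    by (simp add: inner_vec_def matrix_vector_mult_def transpose_def sum_distrib_left mult_ac)
  finally show ?thesis .
qed

lemma norm_Av:
  fixes A :: "real^'n^'m"
  shows "norm (A *v x) \<le> spec_norm A * norm x"
  unfolding spec_norm_def by (rule onorm) simp

lemma norm_ATv:
  fixes A :: "real^'n^'m"
  shows "norm (transpose A *v y) \<le> spec_norm A * norm y"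
proof -
  let ?u = "transpose A *v y"
  have "(norm ?u)^2 = ?u \<bullet> ?u" by (simp add: power2_norm_eq_inner)
  also have "\<dots> = (A *v ?u) \<bullet> y" by (simp add: inner_Av)
  also have "\<dots> \<le> norm (A *v ?u) * norm y" by (rule norm_cauchy_schwarz)
  also have "\<dots> \<le> (spec_norm A * norm ?u) * norm y"
    by (intro mult_right_mono norm_Av) simp
  finally have h: "norm ?u * norm ?u \<le> norm ?u * (spec_norm A * norm y)"
    by (simp add: power2_eq_square mult_ac)
  show ?thesis
  proof (cases "norm ?u = 0")
    case True
    have "0 \<le> spec_norm A" unfolding spec_norm_def by (rule onorm_pos_le) simp
    then show ?thesis using True by simp
  next
    case False
    then have "norm ?u > 0" by simp
    then show ?thesis using h by (simp add: mult_le_cancel_left_pos)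
  qed
qed

lemma spec_norm_nonneg:
  fixes A :: "real^'n^'m"
  shows "0 \<le> spec_norm A"
  unfolding spec_norm_def by (rule onorm_pos_le) simp

lemma spec_norm_pos:
  fixes A :: "real^'n^'m"
  assumes "A \<noteq> 0"
  shows "0 < spec_norm A"
proof -
  have "\<not> (\<forall>x. A *v x = 0)"
  proof
    assume "\<forall>x. A *v x = 0"
    then have "\<forall>x. A *v x = 0 *v x" by simp
    then have "A = 0" using matrix_eq by blast
    then show False using assms by simp
  qed
  then show ?thesis unfolding spec_norm_def by (subst onorm_pos_lt) simp_all
qed

lemma norm_column_le:
  fixes A :: "real^'n^'m"
  shows "norm (column j A) \<le> spec_norm A"
  using norm_Av[of A "axis j 1"] by (simp add: matrix_vector_mult_basis)

lemma shrink_lip: "norm (shrink a - shrink b) \<le> norm (a - b)"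
  by (rule norm_le_componentwise_cart) (simp add: shrink_nth sh_lip)

lemma norm_sq_vec: "(norm (x :: real^'k))^2 = (\<Sum>i\<in>UNIV. (x $ i)^2)"
  unfolding power2_norm_eq_inner inner_vec_def by (simp add: power2_eq_square)

lemma f_expand:
  fixes A :: "real^'n^'m"
  shows "dual_f A b \<alpha> y' - dual_f A b \<alpha> y - dual_grad A b \<alpha> y \<bullet> (y' - y)
     = \<alpha> * (\<Sum>i\<in>UNIV. (sh ((transpose A *v y') $ i))^2 / 2 - (sh ((transpose A *v y) $ i))^2 / 2
            - sh ((transpose A *v y) $ i) * ((transpose A *v y') $ i - (transpose A *v y) $ i))"
proof -
  let ?w = "transpose A *v y" and ?w' = "transpose A *v y'"
  have g: "dual_grad A b \<alpha> y \<bullet> (y' - y) = - (b \<bullet> (y' - y)) + \<alpha> * (shrink ?w \<bullet> (?w' - ?w))"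
    unfolding dual_grad_def by (simp add: inner_diff_left inner_add_left inner_Av matrix_vector_mult_diff_distrib)
  have s1: "(norm (shrink z))^2 = (\<Sum>i\<in>UNIV. (sh (z $ i))^2)" for z :: "real^'n"
    by (simp add: norm_sq_vec shrink_nth)
  have s2: "shrink ?w \<bullet> (?w' - ?w) = (\<Sum>i\<in>UNIV. sh (?w $ i) * (?w' $ i - ?w $ i))"
    by (simp add: inner_vec_def shrink_nth)
  have s3: "(\<Sum>i\<in>UNIV. (sh (?w' $ i))^2 / 2 - (sh (?w $ i))^2 / 2 - sh (?w $ i) * (?w' $ i - ?w $ i))
     = (\<Sum>i\<in>UNIV. (sh (?w' $ i))^2) / 2 - (\<Sum>i\<in>UNIV. (sh (?w $ i))^2) / 2 - (\<Sum>i\<in>UNIV. sh (?w $ i) * (?w' $ i - ?w $ i))"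
    by (simp add: sum_subtractf sum_divide_distrib)
  show ?thesis
    unfolding dual_f_def g s1 s2 s3
    by (simp add: inner_diff_right algebra_simps)
qed

lemma f_bounds:
  fixes A :: "real^'n^'m"
  assumes "\<alpha> > 0"
  shows "0 \<le> dual_f A b \<alpha> y' - dual_f A b \<alpha> y - dual_grad A b \<alpha> y \<bullet> (y' - y)"
    and "dual_f A b \<alpha> y' - dual_f A b \<alpha> y - dual_grad A b \<alpha> y \<bullet> (y' - y)
          \<le> \<alpha> / 2 * (norm (transpose A *v (y' - y)))^2"
proof -
  let ?w = "transpose A *v y" and ?w' = "transpose A *v y'"
  let ?t = "\<lambda>i. (sh (?w' $ i))^2 / 2 - (sh (?w $ i))^2 / 2 - sh (?w $ i) * (?w' $ i - ?w $ i)"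
  have t0: "0 \<le> ?t i" for i using sh_cvx[of "?w $ i" "?w' $ i"] by simp
  have t1: "?t i \<le> (?w' $ i - ?w $ i)^2 / 2" for i using sh_desc[of "?w' $ i" "?w $ i"] by simp
  show "0 \<le> dual_f A b \<alpha> y' - dual_f A b \<alpha> y - dual_grad A b \<alpha> y \<bullet> (y' - y)"
    unfolding f_expand using assms t0 by (intro mult_nonneg_nonneg sum_nonneg) auto
  have "(\<Sum>i\<in>UNIV. ?t i) \<le> (\<Sum>i\<in>UNIV. (?w' $ i - ?w $ i)^2 / 2)" by (intro sum_mono t1)
  also have "\<dots> = (norm (transpose A *v (y' - y)))^2 / 2"
    by (simp add: norm_sq_vec sum_divide_distrib matrix_vector_mult_diff_distrib)
  finally show "dual_f A b \<alpha> y' - dual_f A b \<alpha> y - dual_grad A b \<alpha> y \<bullet> (y' - y)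
          \<le> \<alpha> / 2 * (norm (transpose A *v (y' - y)))^2"
    unfolding f_expand using assms by (simp add: mult_left_mono)
qed

lemma grad_diff:
  fixes A :: "real^'n^'m"
  shows "dual_grad A b \<alpha> u - dual_grad A b \<alpha> v = \<alpha> *\<^sub>R (A *v (shrink (transpose A *v u) - shrink (transpose A *v v)))"
  unfolding dual_grad_def by (simp add: matrix_vector_mult_diff_distrib scaleR_diff_right)

lemma grad_lip:
  fixes A :: "real^'n^'m"
  assumes "\<alpha> > 0"
  shows "norm (dual_grad A b \<alpha> u - dual_grad A b \<alpha> v) \<le> \<alpha> * (spec_norm A)^2 * norm (u - v)"
proof -
  have "norm (dual_grad A b \<alpha> u - dual_grad A b \<alpha> v)
     = \<alpha> * norm (A *v (shrink (transpose A *v u) - shrink (transpose A *v v)))"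
    using assms by (simp add: grad_diff)
  also have "\<dots> \<le> \<alpha> * (spec_norm A * norm (shrink (transpose A *v u) - shrink (transpose A *v v)))"
    using assms by (intro mult_left_mono norm_Av) simp
  also have "\<dots> \<le> \<alpha> * (spec_norm A * norm (transpose A *v u - transpose A *v v))"
    using assms spec_norm_nonneg[of A] by (intro mult_left_mono shrink_lip) simp_all
  also have "\<dots> \<le> \<alpha> * (spec_norm A * (spec_norm A * norm (u - v)))"
    using assms spec_norm_nonneg[of A] norm_ATv[of A "u - v"]
    by (intro mult_left_mono) (simp_all add: matrix_vector_mult_diff_distrib)
  finally show ?thesis by (simp add: power2_eq_square mult_ac)
qed

lemma grad_inner:
  fixes A :: "real^'n^'m"
  shows "(dual_grad A b \<alpha> u - dual_grad A b \<alpha> v) \<bullet> (u - v)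
     = \<alpha> * (\<Sum>i\<in>UNIV. (sh ((transpose A *v u) $ i) - sh ((transpose A *v v) $ i)) * ((transpose A *v u) $ i - (transpose A *v v) $ i))"
proof -
  have "(dual_grad A b \<alpha> u - dual_grad A b \<alpha> v) \<bullet> (u - v)
     = \<alpha> * ((shrink (transpose A *v u) - shrink (transpose A *v v)) \<bullet> (transpose A *v (u - v)))"
    unfolding grad_diff inner_scaleR_left inner_Av ..
  also have "\<dots> = \<alpha> * (\<Sum>i\<in>UNIV. (sh ((transpose A *v u) $ i) - sh ((transpose A *v v) $ i)) * ((transpose A *v u) $ i - (transpose A *v v) $ i))"
    by (simp add: inner_vec_def shrink_nth matrix_vector_mult_diff_distrib)
  finally show ?thesis .
qed

lemma gram_sym: "colsub_gram A S $ i $ k = colsub_gram A S $ k $ i"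
  by (simp add: colsub_gram_def mult.commute)

lemma gram_transpose: "transpose (colsub_gram A S) = colsub_gram A S"
  by (simp add: transpose_def vec_eq_iff gram_sym)

lemma eig_finite:
  fixes M :: "real^'m^'m"
  assumes sym: "transpose M = M"
  shows "finite {l. is_eigenvalue M l}"
proof -
  define E where "E = {l. is_eigenvalue M l}"
  define v where "v l = (SOME v. v \<noteq> 0 \<and> M *v v = l *\<^sub>R v)" for l
  have vl: "v l \<noteq> 0 \<and> M *v v l = l *\<^sub>R v l" if "l \<in> E" for l
  proof -
    have "\<exists>v. v \<noteq> 0 \<and> M *v v = l *\<^sub>R v" using that unfolding E_def is_eigenvalue_def by simp
    then show ?thesis unfolding v_def by (rule someI_ex)
  qed
  have eqv: "l1 = l2" if "l1 \<in> E" "l2 \<in> E" "v l1 = v l2" for l1 l2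
  proof -
    have "l1 *\<^sub>R v l1 = M *v v l1" using vl[OF that(1)] by simp
    also have "\<dots> = M *v v l2" using that(3) by simp
    also have "\<dots> = l2 *\<^sub>R v l2" using vl[OF that(2)] by simp
    also have "\<dots> = l2 *\<^sub>R v l1" using that(3) by simp
    finally have "l1 *\<^sub>R v l1 = l2 *\<^sub>R v l1" .
    then have "(l1 - l2) *\<^sub>R v l1 = 0" by (simp add: scaleR_diff_left)
    then show ?thesis using vl[OF that(1)] by simp
  qed
  have inj: "inj_on v E" by (rule inj_onI) (rule eqv)
  have orth: "v l1 \<bullet> v l2 = 0" if "l1 \<in> E" "l2 \<in> E" "l1 \<noteq> l2" for l1 l2
  proof -
    have "l1 * (v l1 \<bullet> v l2) = (M *v v l1) \<bullet> v l2" using vl[OF that(1)] by simp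
    also have "\<dots> = v l1 \<bullet> (transpose M *v v l2)" by (rule inner_Av)
    also have "\<dots> = l2 * (v l1 \<bullet> v l2)" using vl[OF that(2)] sym by simp
    finally have "(l1 - l2) * (v l1 \<bullet> v l2) = 0" by (simp add: left_diff_distrib)
    then show ?thesis using that(3) by simp
  qed
  have "pairwise orthogonal (v ` E)"
    unfolding pairwise_def orthogonal_def using orth by (metis imageE)
  moreover have "0 \<notin> v ` E" using vl by auto
  ultimately have "independent (v ` E)" by (rule pairwise_orthogonal_independent)
  then have "finite (v ` E)" using independent_bound by blast
  then show ?thesis using inj finite_imageD unfolding E_def by blast
qed

definition LS :: "real^'n^'m \<Rightarrow> real set" where
  "LS A = {l. \<exists>S. (\<exists>j\<in>S. column j A \<noteq> 0) \<and> 0 < l \<and> is_eigenvalue (colsub_gram A S) l}"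

lemma lambdaA_LS: "lambdaA A = Min (LS A)"
  unfolding lambdaA_def LS_def ..

lemma LS_finite: "finite (LS (A :: real^'n^'m))"
proof -
  have "LS A \<subseteq> (\<Union>S\<in>(UNIV :: 'n set set). {l. is_eigenvalue (colsub_gram A S) l})"
    unfolding LS_def by blast
  moreover have "finite (\<Union>S\<in>(UNIV :: 'n set set). {l. is_eigenvalue (colsub_gram A S) l})"
  proof (rule finite_UN_I)
    have "finite (Pow (UNIV :: 'n set))" by simp
    then show "finite (UNIV :: 'n set set)" by (simp only: Pow_UNIV)
  qed (intro eig_finite gram_transpose)
  ultimately show ?thesis by (rule finite_subset)
qed

lemma lambdaA_le:
  assumes "l \<in> LS A"
  shows "lambdaA A \<le> l"
  unfolding lambdaA_LS using LS_finite assms by (rule Min_le)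

lemma gram_single_eig:
  fixes A :: "real^'n^'m"
  assumes "column j A \<noteq> 0"
  shows "(norm (column j A))^2 \<in> LS A"
proof -
  let ?a = "column j A"
  have "colsub_gram A {j} *v ?a = (?a \<bullet> ?a) *\<^sub>R ?a"
    by (simp add: vec_eq_iff colsub_gram_def matrix_vector_mult_def column_def inner_vec_def
        sum_distrib_left mult_ac)
  then have "is_eigenvalue (colsub_gram A {j}) ((norm ?a)^2)"
    unfolding is_eigenvalue_def power2_norm_eq_inner using assms by blast
  then show ?thesis unfolding LS_def using assms by auto
qed

lemma LS_ne:
  fixes A :: "real^'n^'m"
  assumes "A \<noteq> 0"
  obtains j where "column j A \<noteq> 0"
proof -
  have "\<exists>j. column j A \<noteq> 0"
  proof (rule ccontr)
    assume "\<not> (\<exists>j. column j A \<noteq> 0)"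
    then have "\<forall>j. column j A = 0" by blast
    then have "A = 0" by (simp add: vec_eq_iff column_def) 
    then show False using assms by simp
  qed
  then show ?thesis using that by blast
qed

lemma lambdaA_pos_le:
  fixes A :: "real^'n^'m"
  assumes "A \<noteq> 0"
  shows "0 < lambdaA A" "lambdaA A \<le> (spec_norm A)^2"
proof -
  obtain j where j: "column j A \<noteq> 0" using LS_ne[OF assms] by blast
  have ne: "LS A \<noteq> {}" using gram_single_eig[OF j] by blast
  have "lambdaA A \<in> LS A" unfolding lambdaA_LS using LS_finite ne by (rule Min_in)
  then show "0 < lambdaA A" unfolding LS_def by blast
  have "lambdaA A \<le> (norm (column j A))^2" by (rule lambdaA_le[OF gram_single_eig[OF j]])
  also have "\<dots> \<le> (spec_norm A)^2" by (intro power_mono norm_column_le) simp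
  finally show "lambdaA A \<le> (spec_norm A)^2" .
qed

lemma lin_quad_zero:
  fixes p r :: real
  assumes "\<And>t. 0 \<le> p * t + r * t^2"
  shows "p = 0"
proof (rule ccontr)
  assume p: "p \<noteq> 0"
  define R where "R = \<bar>r\<bar> + 1"
  have R: "R > 0" "r \<le> R" unfolding R_def by auto
  define t where "t = - p / (2 * R)"
  have e1: "p * t = -(p^2) / (2 * R)" unfolding t_def by (simp add: power2_eq_square)
  have "r * t^2 \<le> R * t^2" using R by (intro mult_right_mono) auto
  moreover have "R * t^2 = p^2 / (4 * R)"
    unfolding t_def using R by (simp add: power2_eq_square field_simps)
  ultimately have "p * t + r * t^2 \<le> -(p^2) / (2 * R) + p^2 / (4 * R)" using e1 by linarith
  also have "\<dots> = -(p^2) / (4 * R)" using R by (simp add: field_simps)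
  also have "\<dots> < 0" using p R by (simp add: divide_pos_pos)
  finally show False using assms[of t] by simp
qed

lemma rayleigh:
  fixes A :: "real^'n^'m"
  assumes J: "J \<noteq> {}" and ind: "indep_fam (\<lambda>k. column k A) J"
  shows "lambdaA A * (\<Sum>k\<in>J. (c k)^2) \<le> (norm (\<Sum>k\<in>J. c k *\<^sub>R column k A))^2"
proof -
  define q where "q cv = (norm (\<Sum>k\<in>J. (cv $ k) *\<^sub>R column k A))^2" for cv :: "real^'n"
  define Z where "Z = {cv :: real^'n. \<forall>k. k \<notin> J \<longrightarrow> cv $ k = 0}"
  define K where "K = sphere 0 1 \<inter> Z"
  have sZ: "subspace Z"
    by (rule subspaceI) (auto simp: Z_def)
  have cK: "compact K" unfolding K_def
    by (intro compact_Int_closed compact_sphere closed_subspace sZ)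
  obtain j0 where j0: "j0 \<in> J" using J by blast
  have "\<forall>k. k \<notin> J \<longrightarrow> axis j0 (1::real) $ k = 0" using j0 by (auto simp: axis_def)
  then have "axis j0 1 \<in> K" unfolding K_def Z_def by simp
  then have Kne: "K \<noteq> {}" by blast
  have contq: "continuous_on K q" unfolding q_def by (intro continuous_intros)
  obtain c0 where c0K: "c0 \<in> K" and c0min: "\<And>y. y \<in> K \<Longrightarrow> q c0 \<le> q y"
    using continuous_attains_inf[OF cK Kne contq] by blast
  define \<mu> where "\<mu> = q c0"
  define u where "u = (\<Sum>k\<in>J. (c0 $ k) *\<^sub>R column k A)"
  have c0Z: "c0 \<in> Z" and nc0: "norm c0 = 1" using c0K unfolding K_def by auto
  have qscale: "q (r *\<^sub>R cv) = r^2 * q cv" for r cv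
  proof -
    have "(\<Sum>k\<in>J. ((r *\<^sub>R cv) $ k) *\<^sub>R column k A) = r *\<^sub>R (\<Sum>k\<in>J. (cv $ k) *\<^sub>R column k A)"
      by (simp add: scaleR_sum_right)
    then show ?thesis unfolding q_def by (simp add: power_mult_distrib)
  qed
  have q0: "0 \<le> q cv" for cv unfolding q_def by simp
  have claim1: "\<mu> * (norm cv)^2 \<le> q cv" if "cv \<in> Z" for cv
  proof (cases "cv = 0")
    case True then show ?thesis using q0 by simp
  next
    case False
    define s where "s = norm cv"
    have s: "s > 0" using False unfolding s_def by simp
    have "(1 / s) *\<^sub>R cv \<in> K" unfolding K_def using that s sZ
      by (auto simp: s_def subspace_scale)
    then have "\<mu> \<le> q ((1 / s) *\<^sub>R cv)" unfolding \<mu>_def by (rule c0min)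
    also have "\<dots> = q cv / s^2" by (simp add: qscale power2_eq_square)
    finally show ?thesis using s unfolding s_def[symmetric] by (simp add: pos_le_divide_eq)
  qed
  have axsum: "(\<Sum>k\<in>J. (axis j 1 $ k) *\<^sub>R column k A) = column j A" if "j \<in> J" for j
  proof -
    have "(\<Sum>k\<in>J. (axis j 1 $ k) *\<^sub>R column k A) = (\<Sum>k\<in>J. if k = j then column k A else 0)"
      by (rule sum.cong) (auto simp: axis_def)
    also have "\<dots> = column j A" using that by simp
    finally show ?thesis .
  qed
  have claim2: "column j A \<bullet> u = \<mu> * c0 $ j" if jJ: "j \<in> J" for j
  proof -
    let ?a = "column j A"
    have ineq: "0 \<le> (2 * (?a \<bullet> u) - 2 * \<mu> * c0 $ j) * t + ((norm ?a)^2 - \<mu>) * t^2" for t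
    proof -
      let ?cv = "c0 + t *\<^sub>R axis j 1"
      have cvZ: "?cv \<in> Z" using c0Z jJ unfolding Z_def by (auto simp: axis_def)
      have "(\<Sum>k\<in>J. (?cv $ k) *\<^sub>R column k A) = u + t *\<^sub>R ?a"
      proof -
        have "(\<Sum>k\<in>J. (t * axis j 1 $ k) *\<^sub>R column k A) = t *\<^sub>R (\<Sum>k\<in>J. (axis j 1 $ k) *\<^sub>R column k A)"
          by (simp add: scaleR_sum_right)
        then show ?thesis unfolding u_def using axsum[OF jJ]
          by (simp add: scaleR_add_left sum.distrib)
      qed
      then have "q ?cv = (norm (u + t *\<^sub>R ?a))^2" unfolding q_def by simp
      also have "\<dots> = \<mu> + 2 * t * (?a \<bullet> u) + t^2 * (norm ?a)^2"
        unfolding \<mu>_def q_def u_def[symmetric] power2_norm_eq_inner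
        by (simp add: inner_add_left inner_add_right inner_commute power2_eq_square algebra_simps)
      finally have qe: "q ?cv = \<mu> + 2 * t * (?a \<bullet> u) + t^2 * (norm ?a)^2" .
      have "(norm ?cv)^2 = 1 + 2 * t * c0 $ j + t^2"
        using nc0 power2_norm_eq_inner[of c0] unfolding power2_norm_eq_inner[of "c0 + t *\<^sub>R axis j 1"] by (simp add: inner_add_left inner_add_right inner_axis inner_commute power2_eq_square algebra_simps)
      then have "\<mu> * (1 + 2 * t * c0 $ j + t^2) \<le> \<mu> + 2 * t * (?a \<bullet> u) + t^2 * (norm ?a)^2"
        using claim1[OF cvZ] qe by simp
      then show ?thesis by (simp add: algebra_simps)
    qed
    have "2 * (?a \<bullet> u) - 2 * \<mu> * c0 $ j = 0"
      by (rule lin_quad_zero[of _ "(norm ?a)^2 - \<mu>"]) (rule ineq)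
    then show ?thesis by simp
  qed
  have u0: "u \<noteq> 0"
  proof
    assume "u = 0"
    then have "\<forall>k\<in>J. c0 $ k = 0" using ind unfolding indep_fam_def u_def by blast
    then have "c0 = 0" using c0Z unfolding Z_def by (auto simp: vec_eq_iff)
    then show False using nc0 by simp
  qed
  have mu_eq: "\<mu> = (norm u)^2" unfolding \<mu>_def q_def u_def ..
  have mupos: "\<mu> > 0" using u0 mu_eq by simp
  have eig: "colsub_gram A J *v u = \<mu> *\<^sub>R u"
  proof -
    have "(colsub_gram A J *v u) $ i = (\<mu> *\<^sub>R u) $ i" for i
    proof -
      have "(colsub_gram A J *v u) $ i = (\<Sum>l\<in>UNIV. (\<Sum>j\<in>J. A $ i $ j * A $ l $ j) * u $ l)"
        by (simp add: matrix_vector_mult_def colsub_gram_def)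
      also have "\<dots> = (\<Sum>l\<in>UNIV. \<Sum>j\<in>J. A $ i $ j * (A $ l $ j * u $ l))"
        by (simp add: sum_distrib_right sum_distrib_left mult_ac)
      also have "\<dots> = (\<Sum>j\<in>J. \<Sum>l\<in>UNIV. A $ i $ j * (A $ l $ j * u $ l))"
        by (rule sum.swap)
      also have "\<dots> = (\<Sum>j\<in>J. A $ i $ j * (column j A \<bullet> u))"
        by (simp add: inner_vec_def column_def sum_distrib_left)
      also have "\<dots> = (\<Sum>j\<in>J. A $ i $ j * (\<mu> * c0 $ j))"
        by (rule sum.cong) (simp_all add: claim2)
      also have "\<dots> = \<mu> * u $ i"
        by (simp add: u_def column_def sum_distrib_left mult_ac)
      finally show ?thesis by simp
    qed
    then show ?thesis by (simp add: vec_eq_iff)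
  qed
  have "\<exists>j\<in>J. column j A \<noteq> 0"
  proof (rule ccontr)
    assume "\<not> (\<exists>j\<in>J. column j A \<noteq> 0)"
    then have "u = 0" unfolding u_def by simp
    then show False using u0 by simp
  qed
  then have "\<mu> \<in> LS A" unfolding LS_def is_eigenvalue_def using mupos eig u0 by blast
  then have lam: "lambdaA A \<le> \<mu>" by (rule lambdaA_le)
  define cv where "cv = (\<chi> k. if k \<in> J then c k else 0)"
  have cvZ: "cv \<in> Z" unfolding cv_def Z_def by simp
  have ncv: "(norm cv)^2 = (\<Sum>k\<in>J. (c k)^2)"
  proof -
    have "(norm cv)^2 = (\<Sum>k\<in>UNIV. (cv $ k)^2)" by (rule norm_sq_vec)
    also have "\<dots> = (\<Sum>k\<in>UNIV. if k \<in> J then (c k)^2 else 0)"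
      by (rule sum.cong) (auto simp: cv_def)
    also have "\<dots> = (\<Sum>k\<in>J. (c k)^2)" by (simp add: sum.If_cases)
    finally show ?thesis .
  qed
  have qcv: "q cv = (norm (\<Sum>k\<in>J. c k *\<^sub>R column k A))^2"
  proof -
    have "(\<Sum>k\<in>J. (cv $ k) *\<^sub>R column k A) = (\<Sum>k\<in>J. c k *\<^sub>R column k A)"
      by (rule sum.cong) (auto simp: cv_def)
    then show ?thesis unfolding q_def by simp
  qed
  have "lambdaA A * (norm cv)^2 \<le> \<mu> * (norm cv)^2" using lam by (intro mult_right_mono) auto
  also have "\<dots> \<le> q cv" by (rule claim1[OF cvZ])
  finally show ?thesis unfolding ncv qcv .
qed

lemma shrink_cont: "continuous_on X shrink"
proof -
  have "1-lipschitz_on X shrink"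
    by (rule lipschitz_onI) (simp_all add: dist_norm shrink_lip)
  then show ?thesis by (rule lipschitz_on_continuous_on)
qed

lemma Ystar_closed:
  fixes A :: "real^'n^'m"
  shows "closed (Ystar A \<alpha> xs)"
proof -
  have c1: "continuous_on UNIV (\<lambda>y. transpose A *v y)"
    by (rule linear_continuous_on) simp
  have "continuous_on UNIV (\<lambda>y. \<alpha> *\<^sub>R shrink (transpose A *v y))"
    by (intro continuous_intros continuous_on_compose2[OF shrink_cont c1]) auto
  then have "closed {y. \<alpha> *\<^sub>R shrink (transpose A *v y) = (\<lambda>_. xs) y}"
    by (intro closed_Collect_eq) auto
  then show ?thesis unfolding Ystar_def by simp
qed

lemma sh_sub: "\<bar>sh (w::real) - w\<bar> \<le> 1" unfolding sh_cases by auto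

lemma shrink_norm_lower:
  "norm (w :: real^'n) - norm (\<chi> (i::'n). (1::real)) \<le> norm (shrink w)"
proof -
  have "norm (w - shrink w) \<le> norm (\<chi> (i::'n). (1::real))"
    by (rule norm_le_componentwise_cart) (simp add: shrink_nth, metis abs_minus_commute sh_sub)
  then show ?thesis using norm_triangle_ineq2[of w "shrink w"] by (smt (verit) norm_minus_commute)
qed

lemma primal_ineq:
  fixes \<alpha> w x :: real
  assumes "\<alpha> > 0"
  shows "\<bar>\<alpha> * sh w\<bar> + (\<alpha> * sh w)^2 / (2 * \<alpha>) + w * (x - \<alpha> * sh w) + (x - \<alpha> * sh w)^2 / (2 * \<alpha>)
         \<le> \<bar>x\<bar> + x^2 / (2 * \<alpha>)"
proof -
  let ?p = "\<alpha> * sh w"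
  define s where "s = w - sh w"
  have s1: "\<bar>s\<bar> \<le> 1" unfolding s_def using sh_sub[of w] by simp
  have ps: "\<bar>?p\<bar> = ?p * s"
    unfolding s_def sh_cases using assms by (auto simp: abs_mult)
  have xs: "x * s \<le> \<bar>x\<bar>"
  proof -
    have "x * s \<le> \<bar>x * s\<bar>" by simp
    also have "\<dots> \<le> \<bar>x\<bar> * 1" unfolding abs_mult by (intro mult_left_mono s1) simp
    finally show ?thesis by simp
  qed
  have e: "\<bar>?p\<bar> + ?p^2 / (2 * \<alpha>) + w * (x - ?p) + (x - ?p)^2 / (2 * \<alpha>) = x * s + x^2 / (2 * \<alpha>)"
    unfolding ps s_def using assms by (simp add: power2_eq_square field_simps)
  show ?thesis unfolding e using xs by simp
qed

lemma rbp_obj_sum: "rbp_obj \<alpha> x = (\<Sum>i\<in>UNIV. \<bar>x $ i\<bar> + (x $ i)^2 / (2 * \<alpha>))"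
  unfolding rbp_obj_def l1norm_def norm_sq_vec
  by (simp add: sum.distrib sum_divide_distrib)

lemma primal_strong:
  fixes A :: "real^'n^'m"
  assumes "\<alpha> > 0"
  shows "rbp_obj \<alpha> (\<alpha> *\<^sub>R shrink w) + w \<bullet> (x - \<alpha> *\<^sub>R shrink w) + (norm (x - \<alpha> *\<^sub>R shrink w))^2 / (2 * \<alpha>)
         \<le> rbp_obj \<alpha> x"
proof -
  have "rbp_obj \<alpha> (\<alpha> *\<^sub>R shrink w) + w \<bullet> (x - \<alpha> *\<^sub>R shrink w) + (norm (x - \<alpha> *\<^sub>R shrink w))^2 / (2 * \<alpha>)
     = (\<Sum>i\<in>UNIV. \<bar>\<alpha> * sh (w $ i)\<bar> + (\<alpha> * sh (w $ i))^2 / (2 * \<alpha>) + w $ i * (x $ i - \<alpha> * sh (w $ i))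
            + (x $ i - \<alpha> * sh (w $ i))^2 / (2 * \<alpha>))"
    unfolding rbp_obj_sum norm_sq_vec
    by (simp add: inner_vec_def shrink_nth sum.distrib sum_divide_distrib)
  also have "\<dots> \<le> (\<Sum>i\<in>UNIV. \<bar>x $ i\<bar> + (x $ i)^2 / (2 * \<alpha>))"
    by (intro sum_mono primal_ineq assms)
  finally show ?thesis unfolding rbp_obj_sum .
qed

lemma coercive_aux:
  fixes \<alpha> Z N s :: real
  assumes "\<alpha> > 0" "Z \<ge> 0" "N \<ge> 0" "s > N + (2 * Z * (N + 1) / \<alpha> + 1)" "ns \<ge> s - N"
  shows "Z * s < \<alpha> / 2 * ns^2"
proof -
  define D where "D = 2 * Z * (N + 1) / \<alpha> + 1"
  define d where "d = s - N"
  have dD: "d > D" using assms(4) unfolding d_def D_def by simp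
  have D1: "D \<ge> 1" unfolding D_def using assms by simp
  have d1: "d \<ge> 1" "d > 0" using dD D1 by auto
  have hD: "\<alpha> / 2 * (D - 1) = Z * (N + 1)" unfolding D_def using assms by (simp add: field_simps)
  have "Z * s = Z * d + Z * N" unfolding d_def by (simp add: algebra_simps)
  also have "\<dots> \<le> Z * d + Z * d * N"
    using mult_right_mono[OF mult_left_mono[OF d1(1) assms(2)] assms(3)] by simp
  also have "\<dots> = d * (\<alpha> / 2 * (D - 1))" unfolding hD by (simp add: algebra_simps)
  also have "\<dots> < d * (\<alpha> / 2 * d)" using d1 dD assms by (intro mult_strict_left_mono) auto
  also have "\<dots> = \<alpha> / 2 * d^2" by (simp add: power2_eq_square)
  also have "\<dots> \<le> \<alpha> / 2 * ns^2" using assms d1 unfolding d_def by (intro mult_left_mono power_mono) auto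
  finally show ?thesis .
qed

lemma dual_exists:
  fixes A :: "real^'n^'m"
  assumes a: "\<alpha> > 0" and z0: "A *v z0 = b" and sol: "is_rbp_solution A b \<alpha> xs"
  shows "Ystar A \<alpha> xs \<noteq> {}"
proof -
  define \<phi> where "\<phi> w = -(z0 \<bullet> w) + \<alpha> / 2 * (norm (shrink w))^2" for w :: "real^'n"
  have f\<phi>: "dual_f A b \<alpha> y = \<phi> (transpose A *v y)" for y
  proof -
    have "b \<bullet> y = z0 \<bullet> (transpose A *v y)" unfolding z0[symmetric] by (rule inner_Av)
    then show ?thesis unfolding dual_f_def \<phi>_def by simp
  qed
  define W where "W = range (\<lambda>y. transpose A *v y)"
  have sW: "subspace W" unfolding W_def
  proof (rule subspaceI)
    show "0 \<in> range (\<lambda>y. transpose A *v y)" by (rule range_eqI[of _ _ 0]) simp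
  next
    fix x y assume "x \<in> range (\<lambda>y. transpose A *v y)" "y \<in> range (\<lambda>y. transpose A *v y)"
    then obtain u v where "x = transpose A *v u" "y = transpose A *v v" by blast
    then show "x + y \<in> range (\<lambda>y. transpose A *v y)"
      by (intro range_eqI[of _ _ "u + v"]) (simp add: matrix_vector_right_distrib)
  next
    fix c :: real and x assume "x \<in> range (\<lambda>y. transpose A *v y)"
    then obtain u where "x = transpose A *v u" by blast
    then show "c *\<^sub>R x \<in> range (\<lambda>y. transpose A *v y)"
      by (intro range_eqI[of _ _ "c *\<^sub>R u"]) (simp add: matrix_vector_mult_scaleR)
  qed
  have cW: "closed W" using sW by (rule closed_subspace)
  define N where "N = norm (\<chi> (i::'n). (1::real))"
  define Z where "Z = norm z0"
  define R where "R = N + (2 * Z * (N + 1) / \<alpha> + 1)"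
  have N0: "N \<ge> 0" and Z0: "Z \<ge> 0" unfolding N_def Z_def by simp_all
  have R0: "R \<ge> 0" unfolding R_def using N0 Z0 a by simp
  define C where "C = cball 0 R \<inter> W"
  have cC: "compact C" unfolding C_def by (intro compact_Int_closed compact_cball cW)
  have 0: "0 \<in> C" unfolding C_def using R0 subspace_0[OF sW] by simp
  have contphi: "continuous_on C \<phi>" unfolding \<phi>_def by (intro continuous_intros shrink_cont)
  obtain wm where wmC: "wm \<in> C" and wmin: "\<And>w. w \<in> C \<Longrightarrow> \<phi> wm \<le> \<phi> w"
    using continuous_attains_inf[OF cC _ contphi] 0 by blast
  have "shrink 0 = (0::real^'n)" by (simp add: vec_eq_iff shrink_nth sh_cases)
  then have phi0: "\<phi> 0 = 0" unfolding \<phi>_def by simp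
  have glob: "\<phi> wm \<le> \<phi> w" if "w \<in> W" for w
  proof (cases "norm w \<le> R")
    case True then show ?thesis using that by (intro wmin) (simp add: C_def)
  next
    case False
    have "Z * norm w < \<alpha> / 2 * (norm (shrink w))^2"
      using a Z0 N0 False shrink_norm_lower[of w]
      by (intro coercive_aux[where N = N]) (auto simp: R_def N_def)
    moreover have "z0 \<bullet> w \<le> Z * norm w" unfolding Z_def by (rule norm_cauchy_schwarz)
    ultimately have "\<phi> w > 0" unfolding \<phi>_def by simp
    moreover have "\<phi> wm \<le> 0" using wmin[OF 0] phi0 by simp
    ultimately show ?thesis by simp
  qed
  obtain ym where ym: "wm = transpose A *v ym" using wmC unfolding C_def W_def by blast
  have fmin: "dual_f A b \<alpha> ym \<le> dual_f A b \<alpha> y" for y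
    unfolding f\<phi> ym[symmetric] by (rule glob) (simp add: W_def)
  define g where "g = dual_grad A b \<alpha> ym"
  define K where "K = \<alpha> * (spec_norm A)^2"
  have K0: "K \<ge> 0" unfolding K_def using a by simp
  define t where "t = 1 / (K + 1)"
  have t0: "t > 0" unfolding t_def using K0 by simp
  have Kt: "K * t \<le> 1" unfolding t_def using K0 by (simp add: field_simps)
  have g0: "g = 0"
  proof -
    let ?y' = "ym - t *\<^sub>R g"
    have "dual_f A b \<alpha> ?y' - dual_f A b \<alpha> ym - g \<bullet> (?y' - ym) \<le> \<alpha> / 2 * (norm (transpose A *v (?y' - ym)))^2"
      unfolding g_def by (rule f_bounds(2)[OF a])
    moreover have "g \<bullet> (?y' - ym) = - t * (norm g)^2" by (simp add: power2_norm_eq_inner)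
    moreover have "\<alpha> / 2 * (norm (transpose A *v (?y' - ym)))^2 \<le> \<alpha> / 2 * (spec_norm A * (t * norm g))^2"
    proof (rule mult_left_mono)
      have "norm (transpose A *v (?y' - ym)) \<le> spec_norm A * norm (?y' - ym)" by (rule norm_ATv)
      also have "norm (?y' - ym) = t * norm g" using t0 by simp
      finally show "(norm (transpose A *v (?y' - ym)))^2 \<le> (spec_norm A * (t * norm g))^2"
        by (intro power_mono) simp_all
    qed (use a in simp)
    ultimately have "dual_f A b \<alpha> ?y' - dual_f A b \<alpha> ym \<le> - t * (norm g)^2 + \<alpha> / 2 * (spec_norm A * (t * norm g))^2"
      by linarith
    also have "\<alpha> / 2 * (spec_norm A * (t * norm g))^2 = (K * t) * (t * (norm g)^2) / 2"
      unfolding K_def by (simp add: power2_eq_square)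
    also have "\<dots> \<le> 1 * (t * (norm g)^2) / 2" using Kt t0 by (intro divide_right_mono mult_right_mono) auto
    finally have "0 \<le> - t * (norm g)^2 / 2" using fmin[of ?y'] by simp
    then have "t * (norm g)^2 \<le> 0" by simp
    then have "(norm g)^2 \<le> 0" using t0 by (simp add: mult_le_0_iff)
    then show ?thesis by simp
  qed
  define xh where "xh = \<alpha> *\<^sub>R shrink (transpose A *v ym)"
  have Axh: "A *v xh = b" using g0 unfolding g_def dual_grad_def xh_def
    by (simp add: matrix_vector_mult_scaleR)
  have Axs: "A *v xs = b" and opt: "rbp_obj \<alpha> xs \<le> rbp_obj \<alpha> xh"
    using sol Axh unfolding is_rbp_solution_def by auto
  have inner0: "(transpose A *v ym) \<bullet> (xs - xh) = 0"
  proof -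
    have "(transpose A *v ym) \<bullet> (xs - xh) = (xs - xh) \<bullet> (transpose A *v ym)" by (rule inner_commute)
    also have "\<dots> = (A *v (xs - xh)) \<bullet> ym" by (rule inner_Av[symmetric])
    also have "\<dots> = 0" using Axs Axh by (simp add: matrix_vector_mult_diff_distrib)
    finally show ?thesis .
  qed
  have "rbp_obj \<alpha> xh + (norm (xs - xh))^2 / (2 * \<alpha>) \<le> rbp_obj \<alpha> xs"
    using primal_strong[OF a, of "transpose A *v ym" xs] inner0 unfolding xh_def by simp
  then have "(norm (xs - xh))^2 / (2 * \<alpha>) \<le> 0" using opt by simp
  then have "(norm (xs - xh))^2 \<le> 0" using a by (simp add: divide_le_0_iff)
  then have "xs = xh" by simp
  then have "ym \<in> Ystar A \<alpha> xs" unfolding Ystar_def xh_def by simp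
  then show ?thesis by blast
qed

lemma sh_inv1:
  assumes "\<alpha> > 0" "\<alpha> * sh w = x" "x \<noteq> 0"
  shows "w = sgn x * (1 + \<bar>x\<bar> / \<alpha>)"
proof -
  consider "w > 1" | "w < -1" | "-1 \<le> w \<and> w \<le> 1" by linarith
  then show ?thesis
  proof cases
    case 1
    then have "x = \<alpha> * (w - 1)" using assms unfolding sh_cases by simp
    moreover have "x > 0" using 1 assms calculation by simp
    ultimately show ?thesis using assms by (simp add: field_simps)
  next
    case 2
    then have "x = \<alpha> * (w + 1)" using assms unfolding sh_cases by simp
    moreover have "x < 0" using 2 assms calculation by (simp add: mult_pos_neg)
    ultimately show ?thesis using assms by (simp add: field_simps)
  next
    case 3
    then have "x = 0" using assms unfolding sh_cases by simp
    then show ?thesis using assms(3) by simp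
  qed
qed

lemma sh_inv2:
  assumes "\<alpha> > 0" "\<alpha> * sh w = 0"
  shows "\<bar>w\<bar> \<le> 1"
  using assms unfolding sh_cases by (auto split: if_splits)

lemma sh_zero: "\<bar>w\<bar> \<le> 1 \<Longrightarrow> sh w = 0" unfolding sh_cases by auto

lemma Atv_nth: "(transpose A *v u) $ k = column k A \<bullet> u"
  by (simp add: matrix_vector_mult_def transpose_def column_def inner_vec_def mult_ac)

lemma variational:
  fixes A :: "real^'n^'m"
  assumes a: "\<alpha> > 0" and yb: "yb \<in> Ystar A \<alpha> xs"
    and near: "\<And>u. u \<in> Ystar A \<alpha> xs \<Longrightarrow> dist y yb \<le> dist y u"
    and S_def: "S = {i. xs $ i \<noteq> 0}"
    and T_def: "T = {i. xs $ i = 0 \<and> \<bar>(transpose A *v yb) $ i\<bar> = 1}"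
    and wS: "\<forall>k\<in>S. column k A \<bullet> w = 0"
    and wT: "\<forall>k\<in>T. (transpose A *v yb) $ k * (column k A \<bullet> w) \<le> 0"
  shows "(y - yb) \<bullet> w \<le> 0"
proof -
  let ?zb = "transpose A *v yb"
  let ?aw = "\<lambda>k. column k A \<bullet> w"
  have ybc: "\<alpha> * sh (?zb $ k) = xs $ k" for k
    using yb unfolding Ystar_def by (simp add: vec_eq_iff shrink_nth)
  have offS: "\<bar>?zb $ k\<bar> \<le> 1" if "k \<notin> S" for k
    using sh_inv2[OF a] ybc[of k] that unfolding S_def by simp
  define \<delta> where "\<delta> k = (if k \<in> T then 2 else 1 - \<bar>?zb $ k\<bar>)" for k
  have \<delta>pos: "\<delta> k > 0" if "k \<notin> S" for k
    using offS[OF that] that unfolding \<delta>_def T_def S_def by auto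
  define \<epsilon>0 where "\<epsilon>0 = Min (insert 1 ((\<lambda>k. \<delta> k / (\<bar>?aw k\<bar> + 1)) ` (- S)))"
  have fin: "finite (insert 1 ((\<lambda>k. \<delta> k / (\<bar>?aw k\<bar> + 1)) ` (- S)))" by simp
  have e0pos: "\<epsilon>0 > 0" unfolding \<epsilon>0_def using fin \<delta>pos
    by (subst Min_gr_iff) (auto intro!: divide_pos_pos)
  have e0le: "\<epsilon>0 \<le> \<delta> k / (\<bar>?aw k\<bar> + 1)" if "k \<notin> S" for k
    unfolding \<epsilon>0_def using fin that by (intro Min_le) auto
  have feas: "yb + \<epsilon> *\<^sub>R w \<in> Ystar A \<alpha> xs" if e: "0 < \<epsilon>" "\<epsilon> \<le> \<epsilon>0" for \<epsilon>
  proof -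
    have comp: "(transpose A *v (yb + \<epsilon> *\<^sub>R w)) $ k = ?zb $ k + \<epsilon> * ?aw k" for k
      by (simp add: Atv_nth inner_add_right)
    have "\<alpha> * sh ((transpose A *v (yb + \<epsilon> *\<^sub>R w)) $ k) = xs $ k" for k
    proof (cases "k \<in> S")
      case True
      then show ?thesis unfolding comp using wS ybc by simp
    next
      case False
      have eb: "\<epsilon> * \<bar>?aw k\<bar> \<le> \<delta> k"
      proof -
        have "\<epsilon> * \<bar>?aw k\<bar> \<le> \<epsilon> * (\<bar>?aw k\<bar> + 1)" using e by simp
        also have "\<dots> \<le> (\<delta> k / (\<bar>?aw k\<bar> + 1)) * (\<bar>?aw k\<bar> + 1)"
          using e e0le[OF False] by (intro mult_right_mono) auto
        also have "\<dots> = \<delta> k" by simp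
        finally show ?thesis .
      qed
      have "\<bar>?zb $ k + \<epsilon> * ?aw k\<bar> \<le> 1"
      proof (cases "k \<in> T")
        case True
        then have zb1: "\<bar>?zb $ k\<bar> = 1" and st: "?zb $ k * ?aw k \<le> 0" using wT unfolding T_def by auto
        have e2: "\<epsilon> * \<bar>?aw k\<bar> \<le> 2" using eb True unfolding \<delta>_def by simp
        from zb1 have "?zb $ k = 1 \<or> ?zb $ k = -1" by auto
        then show ?thesis
        proof
          assume z1: "?zb $ k = 1"
          then have aw: "?aw k \<le> 0" using st by simp
          then have "\<epsilon> * ?aw k \<le> 0" using e(1) by (simp add: mult_nonneg_nonpos)
          moreover have "\<epsilon> * (- ?aw k) \<le> 2" using e2 aw by simp
          ultimately show ?thesis using z1 by simp
        next
          assume z1: "?zb $ k = -1"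
          then have aw: "?aw k \<ge> 0" using st by simp
          then have "\<epsilon> * ?aw k \<ge> 0" using e(1) by simp
          moreover have "\<epsilon> * ?aw k \<le> 2" using e2 aw by simp
          ultimately show ?thesis using z1 by simp
        qed
      next
        case nT: False
        then have "\<epsilon> * \<bar>?aw k\<bar> \<le> 1 - \<bar>?zb $ k\<bar>" using eb unfolding \<delta>_def by simp
        moreover have "\<bar>?zb $ k + \<epsilon> * ?aw k\<bar> \<le> \<bar>?zb $ k\<bar> + \<epsilon> * \<bar>?aw k\<bar>"
          using e(1) by (metis abs_mult abs_of_pos abs_triangle_ineq)
        ultimately show ?thesis by simp
      qed
      then show ?thesis unfolding comp using False sh_zero unfolding S_def by simp
    qed
    then show ?thesis unfolding Ystar_def by (simp add: vec_eq_iff shrink_nth)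
  qed
  have key: "2 * ((y - yb) \<bullet> w) \<le> \<epsilon> * (norm w)^2" if e: "0 < \<epsilon>" "\<epsilon> \<le> \<epsilon>0" for \<epsilon>
  proof -
    have "dist y yb \<le> dist y (yb + \<epsilon> *\<^sub>R w)" by (rule near[OF feas[OF e]])
    then have "(norm (y - yb))^2 \<le> (norm ((y - yb) - \<epsilon> *\<^sub>R w))^2"
      by (simp add: dist_norm diff_diff_eq)
    then have "(y - yb) \<bullet> (y - yb) \<le> (y - yb) \<bullet> (y - yb) - 2 * \<epsilon> * ((y - yb) \<bullet> w) + \<epsilon>^2 * (w \<bullet> w)"
      unfolding power2_norm_eq_inner by (simp add: inner_diff_left inner_diff_right inner_commute power2_eq_square algebra_simps)
    then have "\<epsilon> * (2 * ((y - yb) \<bullet> w)) \<le> \<epsilon> * (\<epsilon> * (w \<bullet> w))"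
      by (simp add: power2_eq_square algebra_simps)
    then show ?thesis using e(1) by (simp add: power2_norm_eq_inner)
  qed
  show ?thesis
  proof (rule ccontr)
    assume "\<not> (y - yb) \<bullet> w \<le> 0"
    then have p: "(y - yb) \<bullet> w > 0" by simp
    define \<epsilon> where "\<epsilon> = min \<epsilon>0 (((y - yb) \<bullet> w) / ((norm w)^2 + 1))"
    have "0 < ((y - yb) \<bullet> w) / ((norm w)^2 + 1)" using p by (intro divide_pos_pos) (auto intro: add_nonneg_pos)
    then have e: "0 < \<epsilon>" "\<epsilon> \<le> \<epsilon>0" unfolding \<epsilon>_def using e0pos by auto
    have "\<epsilon> * (norm w)^2 \<le> (((y - yb) \<bullet> w) / ((norm w)^2 + 1)) * (norm w)^2"
      unfolding \<epsilon>_def by (intro mult_right_mono) auto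
    also have "\<dots> < (y - yb) \<bullet> w"
    proof -
      have "(norm w)^2 / ((norm w)^2 + 1) < 1"
        by (subst divide_less_eq_1_pos) (auto simp: add_nonneg_pos)
      then have "((y - yb) \<bullet> w) * ((norm w)^2 / ((norm w)^2 + 1)) < ((y - yb) \<bullet> w) * 1"
        using p by (intro mult_strict_left_mono) auto
      then show ?thesis by simp
    qed
    finally show False using key[OF e] p by simp
  qed
qed

lemma amgm_aux:
  fixes c r l :: real
  assumes "l > 0" "r \<ge> 0"
  shows "\<bar>c\<bar> * r \<le> l * c^2 / 2 + r^2 / (2 * l)"
proof -
  have "0 \<le> (l * \<bar>c\<bar> - r)^2" by simp
  then have "2 * l * (\<bar>c\<bar> * r) \<le> l^2 * c^2 + r^2"
    by (simp add: power2_eq_square algebra_simps)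
  then have "\<bar>c\<bar> * r \<le> (l^2 * c^2 + r^2) / (2 * l)" using assms by (simp add: field_simps)
  also have "\<dots> = l * c^2 / 2 + r^2 / (2 * l)" using assms by (simp add: power2_eq_square field_simps)
  finally show ?thesis .
qed

lemma beta_eq:
  fixes p \<alpha> :: real
  assumes "\<alpha> > 0" "p \<ge> 0"
  shows "(p / \<alpha>) / (p / \<alpha> + 2) = p / (p + 2 * \<alpha>)"
proof -
  have n: "p + 2 * \<alpha> \<noteq> 0" "\<alpha> \<noteq> 0" using assms by auto
  have "p / \<alpha> + 2 = (p + 2 * \<alpha>) / \<alpha>" using n by (simp add: field_simps)
  then show ?thesis using n by simp
qed

lemma beta_eq2:
  fixes p \<alpha> :: real
  assumes "\<alpha> > 0"
  shows "(\<alpha> * p / (p + 2 * \<alpha>)) / \<alpha> = p / (p + 2 * \<alpha>)"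
  using assms by simp

lemma rsc:
  fixes A :: "real^'n^'m"
  assumes a: "\<alpha> > 0" and A0: "A \<noteq> 0" and xs0: "xs \<noteq> 0" and yb: "yb \<in> Ystar A \<alpha> xs"
    and near: "\<And>u. u \<in> Ystar A \<alpha> xs \<Longrightarrow> dist y yb \<le> dist y u"
  shows "nu_const A \<alpha> xs * (norm (y - yb))^2 \<le> (dual_grad A b \<alpha> y - dual_grad A b \<alpha> yb) \<bullet> (y - yb)"
proof -
  define zb where "zb = transpose A *v yb"
  define z where "z = transpose A *v y"
  define v where "v = y - yb"
  define S where "S = {i. xs $ i \<noteq> 0}"
  define T where "T = {i. xs $ i = 0 \<and> \<bar>zb $ i\<bar> = 1}"
  define \<sigma> where "\<sigma> k = sgn (zb $ k)" for k
  define g where "g k = \<sigma> k *\<^sub>R column k A" for k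
  have ybc: "\<alpha> * sh (zb $ k) = xs $ k" for k
    using yb unfolding Ystar_def zb_def by (simp add: vec_eq_iff shrink_nth)
  have zbS: "zb $ k = sgn (xs $ k) * (1 + \<bar>xs $ k\<bar> / \<alpha>)" if "k \<in> S" for k
    using sh_inv1[OF a ybc[of k]] that unfolding S_def by simp
  have offS: "\<bar>zb $ k\<bar> \<le> 1" if "k \<notin> S" for k
    using sh_inv2[OF a] ybc[of k] that unfolding S_def by simp
  have sigS: "\<sigma> k = sgn (xs $ k)" if "k \<in> S" for k
  proof -
    have "1 + \<bar>xs $ k\<bar> / \<alpha> > 0" using a by (simp add: add_pos_nonneg)
    then show ?thesis unfolding \<sigma>_def zbS[OF that] by (simp add: sgn_mult)
  qed
  have sig1: "\<sigma> k * \<sigma> k = 1" if "k \<in> S \<union> T" for k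
  proof (cases "k \<in> S")
    case True then show ?thesis using sigS[OF True] unfolding S_def by (simp add: sgn_if)
  next
    case False then have "\<bar>zb $ k\<bar> = 1" using that unfolding T_def by simp
    then show ?thesis unfolding \<sigma>_def by (auto simp: sgn_if abs_if split: if_splits)
  qed
  have sigT: "\<sigma> k = zb $ k" if "k \<in> T" for k
    using that unfolding T_def \<sigma>_def by (auto simp: sgn_if abs_if)
  have colv: "column k A \<bullet> v = z $ k - zb $ k" for k
    unfolding v_def z_def zb_def by (simp add: Atv_nth[symmetric] matrix_vector_mult_diff_distrib)
  have H: "v \<bullet> w \<le> 0" if wS: "\<forall>k\<in>S. g k \<bullet> w = 0" and wT: "\<forall>k\<in>T. g k \<bullet> w \<le> 0" for w
  proof -
    have "\<forall>k\<in>S. column k A \<bullet> w = 0"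
    proof
      fix k assume k: "k \<in> S"
      then have "\<sigma> k * (column k A \<bullet> w) = 0" using wS unfolding g_def by simp
      moreover have "\<sigma> k \<noteq> 0" using sig1[of k] k by auto
      ultimately show "column k A \<bullet> w = 0" by simp
    qed
    moreover have "\<forall>k\<in>T. (transpose A *v yb) $ k * (column k A \<bullet> w) \<le> 0"
      using wT sigT unfolding g_def zb_def by simp
    ultimately show ?thesis unfolding v_def
      by (intro variational[OF a yb near, where S = S and T = T])
         (auto simp: S_def T_def zb_def)
  qed
  have disj: "S \<inter> T = {}" unfolding S_def T_def by auto
  obtain J c where J: "J \<subseteq> S \<union> T" and indg: "indep_fam g J" and vrep: "v = (\<Sum>k\<in>J. c k *\<^sub>R g k)"
    and cpos: "\<forall>k\<in>J \<inter> T. c k \<ge> 0"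
    using farkas_indep[of T S g v] disj H by auto
  define lam where "lam = lambdaA A"
  have lpos: "lam > 0" unfolding lam_def using lambdaA_pos_le[OF A0] by simp
  define \<rho> where "\<rho> k = (if k \<in> S then \<bar>z $ k - zb $ k\<bar> else max (\<bar>z $ k\<bar> - 1) 0)" for k
  have rho0: "\<rho> k \<ge> 0" for k unfolding \<rho>_def by auto
  have stepA: "v \<bullet> v \<le> (\<Sum>k\<in>J. \<bar>c k\<bar> * \<rho> k)"
  proof -
    have "v \<bullet> v = (\<Sum>k\<in>J. c k * (g k \<bullet> v))" by (subst (1) vrep) (simp add: inner_sum_left)
    also have "\<dots> \<le> (\<Sum>k\<in>J. \<bar>c k\<bar> * \<rho> k)"
    proof (rule sum_mono)
      fix k assume kJ: "k \<in> J"
      have gv: "g k \<bullet> v = \<sigma> k * (z $ k - zb $ k)" unfolding g_def by (simp add: colv)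
      show "c k * (g k \<bullet> v) \<le> \<bar>c k\<bar> * \<rho> k"
      proof (cases "k \<in> S")
        case True
        have "c k * (g k \<bullet> v) \<le> \<bar>c k * (g k \<bullet> v)\<bar>" by simp
        also have "\<dots> = \<bar>c k\<bar> * (\<bar>\<sigma> k\<bar> * \<bar>z $ k - zb $ k\<bar>)" unfolding gv by (simp add: abs_mult)
        also have "\<bar>\<sigma> k\<bar> = 1" using sig1[of k] True by (auto simp: abs_if sgn_if \<sigma>_def split: if_splits)
        finally show ?thesis unfolding \<rho>_def using True by simp
      next
        case False
        then have kT: "k \<in> T" using kJ J by auto
        have c0: "c k \<ge> 0" using cpos kJ kT by auto
        have "g k \<bullet> v = \<sigma> k * z $ k - 1"
          unfolding gv using sigT[OF kT] sig1[of k] kT by (simp add: right_diff_distrib)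
        also have "\<dots> \<le> \<rho> k"
        proof -
          have "\<bar>\<sigma> k\<bar> = 1" using sig1[of k] kT by (auto simp: abs_if sgn_if \<sigma>_def split: if_splits)
          then have "\<sigma> k * z $ k \<le> \<bar>z $ k\<bar>" by (metis abs_ge_self abs_mult mult_1)
          then show ?thesis unfolding \<rho>_def using False by simp
        qed
        finally have "c k * (g k \<bullet> v) \<le> c k * \<rho> k" using c0 by (simp add: mult_left_mono)
        then show ?thesis using c0 by simp
      qed
    qed
    finally show ?thesis .
  qed
  have stepB: "lam * (\<Sum>k\<in>J. (c k)^2) \<le> v \<bullet> v"
  proof (cases "J = {}")
    case True then show ?thesis by simp
  next
    case False
    have indc: "indep_fam (\<lambda>k. column k A) J"
      unfolding indep_fam_def
    proof (intro allI impI)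
      fix e assume e: "(\<Sum>k\<in>J. e k *\<^sub>R column k A) = 0"
      have "(\<Sum>k\<in>J. (e k * \<sigma> k) *\<^sub>R g k) = (\<Sum>k\<in>J. e k *\<^sub>R column k A)"
      proof (rule sum.cong)
        fix k assume "k \<in> J"
        then have "\<sigma> k * \<sigma> k = 1" using sig1 J by blast
        then show "(e k * \<sigma> k) *\<^sub>R g k = e k *\<^sub>R column k A" by (simp add: g_def mult.assoc)
      qed simp
      then have "(\<Sum>k\<in>J. (e k * \<sigma> k) *\<^sub>R g k) = 0" using e by simp
      then have ez: "\<forall>k\<in>J. e k * \<sigma> k = 0"
        using indg[unfolded indep_fam_def, rule_format, of "\<lambda>k. e k * \<sigma> k"] by simp
      show "\<forall>k\<in>J. e k = 0"
      proof
        fix k assume k: "k \<in> J"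
        then have "\<sigma> k * \<sigma> k = 1" using sig1 J by blast
        then have "\<sigma> k \<noteq> 0" by auto
        then show "e k = 0" using ez k by auto
      qed
    qed
    have v2: "v = (\<Sum>k\<in>J. (c k * \<sigma> k) *\<^sub>R column k A)" unfolding vrep g_def by simp
    have sq: "(\<Sum>k\<in>J. (c k * \<sigma> k)^2) = (\<Sum>k\<in>J. (c k)^2)"
    proof (rule sum.cong)
      fix k assume "k \<in> J"
      then have "\<sigma> k * \<sigma> k = 1" using sig1 J by auto
      then show "(c k * \<sigma> k)^2 = (c k)^2" by (simp add: power2_eq_square algebra_simps)
    qed simp
    have "lam * (\<Sum>k\<in>J. (c k * \<sigma> k)^2) \<le> (norm (\<Sum>k\<in>J. (c k * \<sigma> k) *\<^sub>R column k A))^2"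
      unfolding lam_def by (rule rayleigh[OF False indc])
    then show ?thesis unfolding sq v2[symmetric] by (simp add: power2_norm_eq_inner)
  qed
  have stepC: "lam * (v \<bullet> v) \<le> (\<Sum>k\<in>UNIV. (\<rho> k)^2)"
  proof -
    have "(\<Sum>k\<in>J. \<bar>c k\<bar> * \<rho> k) \<le> (\<Sum>k\<in>J. lam * (c k)^2 / 2 + (\<rho> k)^2 / (2 * lam))"
      by (intro sum_mono amgm_aux lpos rho0)
    also have "\<dots> = lam * (\<Sum>k\<in>J. (c k)^2) / 2 + (\<Sum>k\<in>J. (\<rho> k)^2) / (2 * lam)"
      by (simp add: sum.distrib sum_divide_distrib sum_distrib_left)
    finally have "v \<bullet> v \<le> (v \<bullet> v) / 2 + (\<Sum>k\<in>J. (\<rho> k)^2) / (2 * lam)"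
      using stepA stepB by linarith
    then have "lam * (v \<bullet> v) \<le> (\<Sum>k\<in>J. (\<rho> k)^2)" using lpos by (simp add: field_simps)
    also have "\<dots> \<le> (\<Sum>k\<in>UNIV. (\<rho> k)^2)" by (intro sum_mono2) auto
    finally show ?thesis .
  qed
  define m where "m = Min ((\<lambda>i. \<alpha> * \<bar>xs $ i\<bar> / (\<bar>xs $ i\<bar> + 2 * \<alpha>)) ` S)"
  have nu: "nu_const A \<alpha> xs = lam * m" unfolding nu_const_def lam_def m_def S_def ..
  have Sne: "S \<noteq> {}" using xs0 unfolding S_def by (auto simp: vec_eq_iff)
  have finS: "finite ((\<lambda>i. \<alpha> * \<bar>xs $ i\<bar> / (\<bar>xs $ i\<bar> + 2 * \<alpha>)) ` S)" by simp
  have mle: "m \<le> \<alpha> * \<bar>xs $ i\<bar> / (\<bar>xs $ i\<bar> + 2 * \<alpha>)" if "i \<in> S" for i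
    unfolding m_def using finS that by (intro Min_le) auto
  have "m \<in> (\<lambda>i. \<alpha> * \<bar>xs $ i\<bar> / (\<bar>xs $ i\<bar> + 2 * \<alpha>)) ` S"
    unfolding m_def using finS Sne by (intro Min_in) auto
  then obtain i0 where i0: "i0 \<in> S" "m = \<alpha> * \<bar>xs $ i0\<bar> / (\<bar>xs $ i0\<bar> + 2 * \<alpha>)"
    by blast
  have m0: "m \<ge> 0" using i0 a by simp
  have mal: "m / \<alpha> \<le> 1"
  proof -
    have pos: "0 < \<bar>xs $ i0\<bar> + 2 * \<alpha>" using a by (simp add: add_nonneg_pos)
    have "\<bar>xs $ i0\<bar> / (\<bar>xs $ i0\<bar> + 2 * \<alpha>) \<le> 1" using a pos by (simp add: divide_le_eq_1)
    then have "\<alpha> * (\<bar>xs $ i0\<bar> / (\<bar>xs $ i0\<bar> + 2 * \<alpha>)) \<le> \<alpha> * 1" using a by (intro mult_left_mono) auto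
    then have "m \<le> \<alpha>" using i0 by simp
    then show ?thesis using a by simp
  qed
  have phi: "m / \<alpha> * (\<rho> i)^2 \<le> (sh (z $ i) - sh (zb $ i)) * (z $ i - zb $ i)" for i
  proof (cases "i \<in> S")
    case True
    define \<beta> where "\<beta> = \<bar>xs $ i\<bar> / \<alpha>"
    have bpos: "\<beta> > 0" using True a unfolding \<beta>_def S_def by simp
    have sg: "\<bar>sgn (xs $ i)\<bar> = 1" using True unfolding S_def by (simp add: abs_sgn)
    have zbi: "zb $ i = sgn (xs $ i) * (1 + \<beta>)" unfolding \<beta>_def by (rule zbS[OF True])
    have "m / \<alpha> \<le> \<beta> / (\<beta> + 2)"
    proof -
      have "\<beta> / (\<beta> + 2) = \<bar>xs $ i\<bar> / (\<bar>xs $ i\<bar> + 2 * \<alpha>)"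
        unfolding \<beta>_def by (rule beta_eq[OF a]) simp
      also have "\<dots> = (\<alpha> * \<bar>xs $ i\<bar> / (\<bar>xs $ i\<bar> + 2 * \<alpha>)) / \<alpha>"
        by (rule beta_eq2[OF a, symmetric])
      finally have "\<beta> / (\<beta> + 2) = (\<alpha> * \<bar>xs $ i\<bar> / (\<bar>xs $ i\<bar> + 2 * \<alpha>)) / \<alpha>" .
      moreover have "m / \<alpha> \<le> (\<alpha> * \<bar>xs $ i\<bar> / (\<bar>xs $ i\<bar> + 2 * \<alpha>)) / \<alpha>"
        using mle[OF True] a by (intro divide_right_mono) auto
      ultimately show ?thesis by simp
    qed
    moreover have "(\<rho> i)^2 = (z $ i - zb $ i)^2" unfolding \<rho>_def using True by simp
    ultimately have "m / \<alpha> * (\<rho> i)^2 \<le> \<beta> / (\<beta> + 2) * (z $ i - zb $ i)^2"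
      by (metis mult_right_mono zero_le_power2)
    also have "\<dots> \<le> (sh (z $ i) - sh (zb $ i)) * (z $ i - zb $ i)"
      unfolding zbi by (rule sh_supp[OF bpos sg])
    finally show ?thesis .
  next
    case False
    have "m / \<alpha> * (\<rho> i)^2 \<le> 1 * (\<rho> i)^2" using mal by (intro mult_right_mono) auto
    also have "\<dots> \<le> (sh (z $ i) - sh (zb $ i)) * (z $ i - zb $ i)"
      unfolding \<rho>_def using False by (simp add: sh_off offS)
    finally show ?thesis .
  qed
  have "(dual_grad A b \<alpha> y - dual_grad A b \<alpha> yb) \<bullet> (y - yb) = \<alpha> * (\<Sum>i\<in>UNIV. (sh (z $ i) - sh (zb $ i)) * (z $ i - zb $ i))"
    unfolding z_def zb_def by (rule grad_inner)
  also have "\<dots> \<ge> \<alpha> * (\<Sum>i\<in>UNIV. m / \<alpha> * (\<rho> i)^2)"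
    using a by (intro mult_left_mono sum_mono phi) auto
  finally have "(dual_grad A b \<alpha> y - dual_grad A b \<alpha> yb) \<bullet> (y - yb) \<ge> m * (\<Sum>i\<in>UNIV. (\<rho> i)^2)"
    using a by (simp add: sum_distrib_left)
  moreover have "m * (lam * (v \<bullet> v)) \<le> m * (\<Sum>i\<in>UNIV. (\<rho> i)^2)" using mult_left_mono[OF stepC m0] .
  ultimately show ?thesis unfolding nu v_def by (simp add: power2_norm_eq_inner mult_ac)
qed

lemma nu_bounds:
  fixes A :: "real^'n^'m"
  assumes a: "\<alpha> > 0" and A0: "A \<noteq> 0" and xs0: "xs \<noteq> 0"
  shows "nu_const A \<alpha> xs < \<alpha> * (spec_norm A)^2"
proof -
  define S where "S = {i. xs $ i \<noteq> 0}"
  define m where "m = Min ((\<lambda>i. \<alpha> * \<bar>xs $ i\<bar> / (\<bar>xs $ i\<bar> + 2 * \<alpha>)) ` S)"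
  have nu: "nu_const A \<alpha> xs = lambdaA A * m" unfolding nu_const_def m_def S_def ..
  have Sne: "S \<noteq> {}" using xs0 unfolding S_def by (auto simp: vec_eq_iff)
  have finS: "finite ((\<lambda>i. \<alpha> * \<bar>xs $ i\<bar> / (\<bar>xs $ i\<bar> + 2 * \<alpha>)) ` S)" by simp
  have "m \<in> (\<lambda>i. \<alpha> * \<bar>xs $ i\<bar> / (\<bar>xs $ i\<bar> + 2 * \<alpha>)) ` S"
    unfolding m_def using finS Sne by (intro Min_in) auto
  then obtain i0 where i0: "i0 \<in> S" "m = \<alpha> * \<bar>xs $ i0\<bar> / (\<bar>xs $ i0\<bar> + 2 * \<alpha>)"
    by blast
  have pos: "0 < \<bar>xs $ i0\<bar> + 2 * \<alpha>" using a by (simp add: add_nonneg_pos)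
  have "\<bar>xs $ i0\<bar> / (\<bar>xs $ i0\<bar> + 2 * \<alpha>) < 1" using a pos by (simp add: divide_less_eq_1)
  then have "\<alpha> * (\<bar>xs $ i0\<bar> / (\<bar>xs $ i0\<bar> + 2 * \<alpha>)) < \<alpha> * 1" using a by (intro mult_strict_left_mono) auto
  then have mlt: "m < \<alpha>" using i0 by simp
  have lp: "0 < lambdaA A" "lambdaA A \<le> (spec_norm A)^2" using lambdaA_pos_le[OF A0] by auto
  have "lambdaA A * m < lambdaA A * \<alpha>" using mlt lp by (intro mult_strict_left_mono) auto
  also have "\<dots> \<le> (spec_norm A)^2 * \<alpha>" using lp a by (intro mult_right_mono) auto
  finally show ?thesis unfolding nu by (simp add: mult_ac)
qed

lemma powr_half_pow:
  assumes "\<mu> > 0"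
  shows "\<mu> powr (real k / 2) = sqrt \<mu> ^ k"
proof -
  have "sqrt \<mu> ^ k = sqrt \<mu> powr (real k)" using assms by (simp add: powr_realpow)
  also have "\<dots> = (\<mu> powr (1/2)) powr (real k)" using assms by (simp add: powr_half_sqrt)
  also have "\<dots> = \<mu> powr (real k / 2)" by (simp add: powr_powr)
  finally show ?thesis by simp
qed

theorem mainTheorem18:
  fixes A :: "real^'n^'m" and b :: "real^'m" and \<alpha> h :: real
    and xs :: "real^'n" and x :: "nat \<Rightarrow> real^'n" and y :: "nat \<Rightarrow> real^'m"
  assumes "A \<noteq> 0" and "b \<noteq> 0" and "\<exists>z. A *v z = b" and "\<alpha> > 0"
    and "is_rbp_solution A b \<alpha> xs"
    and "0 < h"
    and "h < 2 * nu_const A \<alpha> xs / (\<alpha>\<^sup>2 * spec_norm A ^ 4)"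
    and "\<And>k. x (Suc k) = \<alpha> *\<^sub>R shrink (transpose A *v y k)"
    and "\<And>k. y (Suc k) = y k - h *\<^sub>R dual_grad A b \<alpha> (y k)"
  shows "let \<mu> = 1 - 2 * h * nu_const A \<alpha> xs + h\<^sup>2 * \<alpha>\<^sup>2 * spec_norm A ^ 4;
             L = \<alpha> * (spec_norm A)\<^sup>2;
             fstar = (INF z. dual_f A b \<alpha> z);
             d0 = infdist (y 0) (Ystar A \<alpha> xs)
         in 0 < \<mu> \<and> \<mu> < 1
          \<and> (\<forall>u v. norm (dual_grad A b \<alpha> u - dual_grad A b \<alpha> v) \<le> L * norm (u - v))
          \<and> (\<forall>k. infdist (y k) (Ystar A \<alpha> xs) \<le> \<mu> powr (real k / 2) * d0
               \<and> dual_f A b \<alpha> (y k) - fstar \<le> L / 2 * \<mu> ^ k * d0\<^sup>2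
               \<and> norm (x (Suc k) - xs) \<le> \<alpha> * spec_norm A * infdist (y k) (Ystar A \<alpha> xs))"
proof -
  note A0 = assms(1) and b0 = assms(2) and a = assms(4) and sol = assms(5) and h0 = assms(6)
    and hlt = assms(7) and xdef = assms(8) and ydef = assms(9)
  obtain z0 where z0: "A *v z0 = b" using assms(3) by blast
  define Y where "Y = Ystar A \<alpha> xs"
  define \<nu> where "\<nu> = nu_const A \<alpha> xs"
  define s where "s = spec_norm A"
  define L where "L = \<alpha> * s^2"
  define \<mu> where "\<mu> = 1 - 2 * h * \<nu> + h\<^sup>2 * \<alpha>\<^sup>2 * s ^ 4"
  have s0: "s > 0" unfolding s_def using spec_norm_pos[OF A0] .
  have L0: "L > 0" unfolding L_def using a s0 by simp
  have Axs: "A *v xs = b" using sol unfolding is_rbp_solution_def by simp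
  have xs0: "xs \<noteq> 0" using Axs b0 by auto
  have Yne: "Y \<noteq> {}" unfolding Y_def using dual_exists[OF a z0 sol] .
  have Ycl: "closed Y" unfolding Y_def by (rule Ystar_closed)
  have nuL: "\<nu> < L" unfolding \<nu>_def L_def s_def using nu_bounds[OF a A0 xs0] .
  have L2: "L^2 = \<alpha>\<^sup>2 * s ^ 4" unfolding L_def by (simp add: power2_eq_square power4_eq_xxxx)
  have hL: "h\<^sup>2 * \<alpha>\<^sup>2 * s ^ 4 = h^2 * L^2" unfolding L2 by (simp add: mult.assoc)
  have mu_alt: "\<mu> = (1 - h * L)^2 + 2 * h * (L - \<nu>)" unfolding \<mu>_def hL
    by (simp add: power2_eq_square algebra_simps)
  have mu0: "0 < \<mu>" unfolding mu_alt using h0 nuL by (intro add_nonneg_pos) auto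
  have den: "\<alpha>\<^sup>2 * s ^ 4 > 0" using a s0 by simp
  have "h * (\<alpha>\<^sup>2 * s ^ 4) < 2 * \<nu>" using hlt den unfolding \<nu>_def s_def by (simp add: pos_less_divide_eq)
  then have "h * (h * (\<alpha>\<^sup>2 * s ^ 4)) < h * (2 * \<nu>)" using h0 by (intro mult_strict_left_mono)
  then have mu1: "\<mu> < 1" unfolding \<mu>_def by (simp add: power2_eq_square algebra_simps)
  have grad0: "dual_grad A b \<alpha> u = 0" if "u \<in> Y" for u
  proof -
    have "\<alpha> *\<^sub>R shrink (transpose A *v u) = xs" using that unfolding Y_def Ystar_def by simp
    then have "\<alpha> *\<^sub>R (A *v shrink (transpose A *v u)) = b"
      using Axs by (metis matrix_vector_mult_scaleR)
    then show ?thesis unfolding dual_grad_def by simp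
  qed
  have glip: "norm (dual_grad A b \<alpha> u - dual_grad A b \<alpha> v) \<le> L * norm (u - v)" for u v
    unfolding L_def s_def by (rule grad_lip[OF a])
  have nearest: "\<exists>yb\<in>Y. infdist u Y = dist u yb \<and> (\<forall>w\<in>Y. dist u yb \<le> dist u w)" for u
  proof -
    obtain yb where yb: "yb \<in> Y" "infdist u Y = dist u yb" using infdist_attains_inf[OF Ycl Yne] by blast
    then have "\<forall>w\<in>Y. dist u yb \<le> dist u w" using infdist_le by metis
    then show ?thesis using yb by blast
  qed
  have fmin: "dual_f A b \<alpha> yb \<le> dual_f A b \<alpha> u" if "yb \<in> Y" for yb u
    using f_bounds(1)[OF a, of A b u yb] grad0[OF that] by simp
  have fstar: "(INF z. dual_f A b \<alpha> z) = dual_f A b \<alpha> yb" if "yb \<in> Y" for yb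
    by (rule cInf_eq_minimum) (use fmin[OF that] in auto)
  have step: "infdist (u - h *\<^sub>R dual_grad A b \<alpha> u) Y \<le> sqrt \<mu> * infdist u Y" for u
  proof -
    obtain yb where yb: "yb \<in> Y" "infdist u Y = dist u yb" and nr: "\<forall>w\<in>Y. dist u yb \<le> dist u w"
      using nearest by blast
    define d where "d = u - yb"
    define g where "g = dual_grad A b \<alpha> u"
    have rs: "\<nu> * (norm d)^2 \<le> g \<bullet> d"
      using rsc[OF a A0 xs0 yb(1)[unfolded Y_def], of u b] nr grad0[OF yb(1)]
      unfolding \<nu>_def g_def d_def Y_def by simp
    have gn: "norm g \<le> L * norm d"
      using glip[of u yb] grad0[OF yb(1)] unfolding g_def d_def by simp
    have "(norm (u - h *\<^sub>R g - yb))^2 = (norm d)^2 - 2 * h * (g \<bullet> d) + h^2 * (norm g)^2"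
      unfolding d_def power2_norm_eq_inner
      by (simp add: inner_diff_left inner_diff_right inner_commute power2_eq_square algebra_simps)
    also have "\<dots> \<le> (norm d)^2 - 2 * h * (\<nu> * (norm d)^2) + h^2 * (L * norm d)^2"
    proof -
      have "2 * h * (\<nu> * (norm d)^2) \<le> 2 * h * (g \<bullet> d)" using rs h0 by simp
      moreover have "h^2 * (norm g)^2 \<le> h^2 * (L * norm d)^2"
        using gn by (intro mult_left_mono power_mono) auto
      ultimately show ?thesis by linarith
    qed
    also have "\<dots> = \<mu> * (norm d)^2" unfolding \<mu>_def hL
      by (simp add: power2_eq_square algebra_simps)
    finally have "(norm (u - h *\<^sub>R g - yb))^2 \<le> \<mu> * (norm d)^2" .
    then have "norm (u - h *\<^sub>R g - yb) \<le> sqrt (\<mu> * (norm d)^2)" by (simp add: real_le_rsqrt)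
    also have "\<dots> = sqrt \<mu> * norm d" using mu0 by (simp add: real_sqrt_mult)
    finally have "dist (u - h *\<^sub>R g) yb \<le> sqrt \<mu> * norm d" by (simp add: dist_norm)
    moreover have "infdist (u - h *\<^sub>R g) Y \<le> dist (u - h *\<^sub>R g) yb" using yb(1) by (rule infdist_le)
    ultimately show ?thesis using yb(2) unfolding g_def d_def by (simp add: dist_norm)
  qed
  have decay: "infdist (y k) Y \<le> sqrt \<mu> ^ k * infdist (y 0) Y" for k
  proof (induction k)
    case 0 then show ?case by simp
  next
    case (Suc k)
    have "infdist (y (Suc k)) Y \<le> sqrt \<mu> * infdist (y k) Y" unfolding ydef by (rule step)
    also have "\<dots> \<le> sqrt \<mu> * (sqrt \<mu> ^ k * infdist (y 0) Y)" using Suc mu0 by (intro mult_left_mono) auto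
    finally show ?case by (simp add: mult_ac)
  qed
  have main: "infdist (y k) Y \<le> \<mu> powr (real k / 2) * infdist (y 0) Y
          \<and> dual_f A b \<alpha> (y k) - (INF z. dual_f A b \<alpha> z) \<le> L / 2 * \<mu> ^ k * (infdist (y 0) Y)\<^sup>2
          \<and> norm (x (Suc k) - xs) \<le> \<alpha> * s * infdist (y k) Y" for k
  proof -
    have d1: "infdist (y k) Y \<le> \<mu> powr (real k / 2) * infdist (y 0) Y"
      using decay[of k] powr_half_pow[OF mu0, of k] by simp
    obtain yb where yb: "yb \<in> Y" "infdist (y k) Y = dist (y k) yb"
      using nearest by blast
    have Dk0: "0 \<le> infdist (y k) Y" by (rule infdist_nonneg)
    have sq: "(infdist (y k) Y)^2 \<le> \<mu> ^ k * (infdist (y 0) Y)^2"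
    proof -
      have "(infdist (y k) Y)^2 \<le> (sqrt \<mu> ^ k * infdist (y 0) Y)^2"
        using decay[of k] Dk0 by (intro power_mono) auto
      also have "\<dots> = \<mu> ^ k * (infdist (y 0) Y)^2"
        using mu0 by (simp add: power_mult_distrib power_mult[symmetric] mult.commute[of k 2] power_mult)
      finally show ?thesis .
    qed
    have f2: "dual_f A b \<alpha> (y k) - (INF z. dual_f A b \<alpha> z) \<le> L / 2 * \<mu> ^ k * (infdist (y 0) Y)\<^sup>2"
    proof -
      have "dual_f A b \<alpha> (y k) - dual_f A b \<alpha> yb \<le> \<alpha> / 2 * (norm (transpose A *v (y k - yb)))^2"
        using f_bounds(2)[OF a, of A b "y k" yb] grad0[OF yb(1)] by simp
      also have "\<dots> \<le> \<alpha> / 2 * (s * norm (y k - yb))^2"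
        using a norm_ATv[of A "y k - yb"] unfolding s_def by (intro mult_left_mono power_mono) auto
      also have "\<dots> = L / 2 * (infdist (y k) Y)^2"
        unfolding L_def yb(2) dist_norm by (simp add: power_mult_distrib)
      also have "\<dots> \<le> L / 2 * (\<mu> ^ k * (infdist (y 0) Y)^2)"
        using L0 sq by (intro mult_left_mono) auto
      finally show ?thesis using fstar[OF yb(1)] by (simp add: mult_ac)
    qed
    have x3: "norm (x (Suc k) - xs) \<le> \<alpha> * s * infdist (y k) Y"
    proof -
      have xsb: "xs = \<alpha> *\<^sub>R shrink (transpose A *v yb)" using yb(1) unfolding Y_def Ystar_def by simp
      have "norm (x (Suc k) - xs) = \<alpha> * norm (shrink (transpose A *v y k) - shrink (transpose A *v yb))"
        unfolding xdef xsb using a by (simp add: scaleR_diff_right[symmetric])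
      also have "\<dots> \<le> \<alpha> * norm (transpose A *v (y k - yb))"
        using a shrink_lip by (intro mult_left_mono) (auto simp: matrix_vector_mult_diff_distrib)
      also have "\<dots> \<le> \<alpha> * (s * norm (y k - yb))"
        using a norm_ATv[of A "y k - yb"] unfolding s_def by (intro mult_left_mono) auto
      finally show ?thesis unfolding yb(2) dist_norm by (simp add: mult_ac)
    qed
    show ?thesis using d1 f2 x3 by blast
  qed
  show ?thesis
    unfolding Let_def \<mu>_def[symmetric, unfolded \<nu>_def s_def] L_def[symmetric, unfolded s_def]
    using mu0 mu1 glip main unfolding Y_def s_def \<nu>_def \<mu>_def L_def by blast
qed

end
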